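(* Let $\mathcal K$ be a finitely complete 2-category and $f:A\to B$ a 1-cell. (1) (Yoneda lemma) For any span $(d_1,E_1,c_1)$ from $X$ to $A$ and any discrete fibration $(d_2,E_2,c_2)$ from $X$ to $B$, a map of spans $f/B\circ E_1\to E_2$ is determined uniquely by its composite with the map of spans $i_f\circ\mathrm{id}:f\circ E_1\to f/B\circ E_1$. (2) (Coyoneda lemma) For any span $(d_1,E_1,c_1)$ from $A$ to $X$ and any discrete fibration $(d_2,E_2,c_2)$ from $B$ to $X$, a map of spans $E_1\circ B/f\to E_2$ is determined uniquely by its composite with the map of spans $\mathrm{id}\circ j_f:E_1\circ f^{rev}\to E_1\circ B/f$.
   Context: Lax pullbacks: $f/B$ denotes the lax pullback of $f$ and $1_B$, with projections $p:f/B\to A$, $q:f/B\to B$ and universal 2-cell $\lambda:fp\Rightarrow q$; $B/f$ denotes the lax pullback of $1_B$ and $f$, with projections $p':B/f\to B$, $q':B/f\to A$ and universal 2-cell $\lambda':p'\Rightarrow fq'$. $i_f:A\to f/B$ is the unique 1-cell with $pi_f=1_A$, $qi_f=f$, $\lambda i_f=\mathrm{id}$; $j_f:A\to B/f$ is the unique 1-cell with $p'j_f=f$, $q'j_f=1_A$, $\lambda'j_f=\mathrm{id}$. Spans: a span from $A$ to $B$ is $(d,E,c)$ with $d:E\to A$, $c:E\to B$; a map of spans is a 1-cell between heads commuting with both legs. Composition is by pullback: for $(d_1,E_1,c_1)$ from $A$ to $B$ and $(d_2,E_2,c_2)$ from $B$ to $C$, $E_2\circ E_1=(d_1\pi_1,E_1\times_BE_2,c_2\pi_2)$;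 this is functorial in maps of spans (the horizontal composite $\alpha\circ\beta$ of span maps is the induced map of pullbacks). The span $f$ is $(1_A,A,f)$ from $A$ to $B$, $f^{rev}$ is $(f,A,1_A)$ from $B$ to $A$, $f/B$ is the span $(p,f/B,q)$ from $A$ to $B$, and $B/f$ is the span $(p',B/f,q')$ from $B$ to $A$; $i_f$ is a map of spans $f\to f/B$ and $j_f$ a map of spans $f^{rev}\to B/f$. A span $(d,E,c)$ from $A$ to $B$ is a discrete fibration from $A$ to $B$ if for every object $Y$ the span of categories $\mathcal K(Y,A)\leftarrow\mathcal K(Y,E)\to\mathcal K(Y,B)$ is a discrete fibration, meaning: (i) for each object $e$ and arrow $u:a\to d(e)$ there is a unique $\bar u$ with codomain $e$, $d(\bar u)=u$ and $c(\bar u)$ an identity; (ii) for each $v:c(e)\to b$ there is a unique $\bar v$ with domain $e$, $d(\bar v)$ an identity and $c(\bar v)=v$; (iii) every arrow $h$ equals the (defined) composite $\overline{d(h)}\circ\overline{c(h)}$. *)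

theory Defs
  imports Main
begin

text \<open>A (strict) 2-category given by carrier sets of objects, 1-cells and 2-cells.
  comp1 g f is g after f; vcomp b a is b after a (vertical);
  hcomp b a is the horizontal composite of a (first) with b (second).\<close>

record ('o, 'm, 'c) two_cat =
  obj   :: "'o set"
  arr   :: "'m set"
  cell  :: "'c set"
  s1    :: "'m \<Rightarrow> 'o"
  t1    :: "'m \<Rightarrow> 'o"
  comp1 :: "'m \<Rightarrow> 'm \<Rightarrow> 'm"
  ide1  :: "'o \<Rightarrow> 'm"
  cdom  :: "'c \<Rightarrow> 'm"
  ccod  :: "'c \<Rightarrow> 'm"
  vcomp :: "'c \<Rightarrow> 'c \<Rightarrow> 'c"
  hcomp :: "'c \<Rightarrow> 'c \<Rightarrow> 'c"
  ide2  :: "'m \<Rightarrow> 'c"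

definition hom :: "('o,'m,'c) two_cat \<Rightarrow> 'o \<Rightarrow> 'o \<Rightarrow> 'm set" where
  "hom K a b = {f \<in> arr K. s1 K f = a \<and> t1 K f = b}"

definition cell2 :: "('o,'m,'c) two_cat \<Rightarrow> 'm \<Rightarrow> 'm \<Rightarrow> 'c set" where
  "cell2 K f g = {\<alpha> \<in> cell K. cdom K \<alpha> = f \<and> ccod K \<alpha> = g}"

definition wl :: "('o,'m,'c) two_cat \<Rightarrow> 'm \<Rightarrow> 'c \<Rightarrow> 'c" where
  "wl K g \<alpha> = hcomp K (ide2 K g) \<alpha>"

definition wr :: "('o,'m,'c) two_cat \<Rightarrow> 'c \<Rightarrow> 'm \<Rightarrow> 'c" where
  "wr K \<alpha> f = hcomp K \<alpha> (ide2 K f)"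

definition two_category :: "('o,'m,'c) two_cat \<Rightarrow> bool" where
  "two_category K \<longleftrightarrow>
    (\<forall>f\<in>arr K. s1 K f \<in> obj K \<and> t1 K f \<in> obj K) \<and>
    (\<forall>a\<in>obj K. ide1 K a \<in> hom K a a) \<and>
    (\<forall>f\<in>arr K. \<forall>g\<in>arr K. t1 K f = s1 K g \<longrightarrow> comp1 K g f \<in> hom K (s1 K f) (t1 K g)) \<and>
    (\<forall>f\<in>arr K. \<forall>g\<in>arr K. \<forall>h\<in>arr K. t1 K f = s1 K g \<and> t1 K g = s1 K h \<longrightarrow>
        comp1 K h (comp1 K g f) = comp1 K (comp1 K h g) f) \<and>
    (\<forall>f\<in>arr K. comp1 K (ide1 K (t1 K f)) f = f \<and> comp1 K f (ide1 K (s1 K f)) = f) \<and>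
    (\<forall>\<alpha>\<in>cell K. cdom K \<alpha> \<in> arr K \<and> ccod K \<alpha> \<in> arr K \<and>
        s1 K (cdom K \<alpha>) = s1 K (ccod K \<alpha>) \<and> t1 K (cdom K \<alpha>) = t1 K (ccod K \<alpha>)) \<and>
    (\<forall>f\<in>arr K. ide2 K f \<in> cell2 K f f) \<and>
    (\<forall>\<alpha>\<in>cell K. \<forall>\<beta>\<in>cell K. ccod K \<alpha> = cdom K \<beta> \<longrightarrow>
        vcomp K \<beta> \<alpha> \<in> cell2 K (cdom K \<alpha>) (ccod K \<beta>)) \<and>
    (\<forall>\<alpha>\<in>cell K. \<forall>\<beta>\<in>cell K. \<forall>\<gamma>\<in>cell K. ccod K \<alpha> = cdom K \<beta> \<and> ccod K \<beta> = cdom K \<gamma> \<longrightarrow>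
        vcomp K \<gamma> (vcomp K \<beta> \<alpha>) = vcomp K (vcomp K \<gamma> \<beta>) \<alpha>) \<and>
    (\<forall>\<alpha>\<in>cell K. vcomp K (ide2 K (ccod K \<alpha>)) \<alpha> = \<alpha> \<and> vcomp K \<alpha> (ide2 K (cdom K \<alpha>)) = \<alpha>) \<and>
    (\<forall>\<alpha>\<in>cell K. \<forall>\<beta>\<in>cell K. t1 K (cdom K \<alpha>) = s1 K (cdom K \<beta>) \<longrightarrow>
        hcomp K \<beta> \<alpha> \<in> cell2 K (comp1 K (cdom K \<beta>) (cdom K \<alpha>)) (comp1 K (ccod K \<beta>) (ccod K \<alpha>))) \<and>
    (\<forall>\<alpha>\<in>cell K. \<forall>\<beta>\<in>cell K. \<forall>\<gamma>\<in>cell K.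
        t1 K (cdom K \<alpha>) = s1 K (cdom K \<beta>) \<and> t1 K (cdom K \<beta>) = s1 K (cdom K \<gamma>) \<longrightarrow>
        hcomp K \<gamma> (hcomp K \<beta> \<alpha>) = hcomp K (hcomp K \<gamma> \<beta>) \<alpha>) \<and>
    (\<forall>\<alpha>\<in>cell K. hcomp K (ide2 K (ide1 K (t1 K (cdom K \<alpha>)))) \<alpha> = \<alpha> \<and>
        hcomp K \<alpha> (ide2 K (ide1 K (s1 K (cdom K \<alpha>)))) = \<alpha>) \<and>
    (\<forall>f\<in>arr K. \<forall>g\<in>arr K. t1 K f = s1 K g \<longrightarrow>
        hcomp K (ide2 K g) (ide2 K f) = ide2 K (comp1 K g f)) \<and>
    (\<forall>\<alpha>\<in>cell K. \<forall>\<alpha>'\<in>cell K. \<forall>\<beta>\<in>cell K. \<forall>\<beta>'\<in>cell K.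
        ccod K \<alpha> = cdom K \<alpha>' \<and> ccod K \<beta> = cdom K \<beta>' \<and> t1 K (cdom K \<alpha>) = s1 K (cdom K \<beta>) \<longrightarrow>
        hcomp K (vcomp K \<beta>' \<beta>) (vcomp K \<alpha>' \<alpha>) = vcomp K (hcomp K \<beta>' \<alpha>') (hcomp K \<beta> \<alpha>))"

definition is_terminal :: "('o,'m,'c) two_cat \<Rightarrow> 'o \<Rightarrow> bool" where
  "is_terminal K T \<longleftrightarrow> T \<in> obj K \<and>
    (\<forall>Y\<in>obj K. (\<exists>!t. t \<in> hom K Y T) \<and>
       (\<forall>t\<in>hom K Y T. \<forall>t'\<in>hom K Y T. \<exists>!\<gamma>. \<gamma> \<in> cell2 K t t'))"

definition is_pullback :: "('o,'m,'c) two_cat \<Rightarrow> 'm \<Rightarrow> 'm \<Rightarrow> 'o \<Rightarrow> 'm \<Rightarrow> 'm \<Rightarrow> bool" where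
  "is_pullback K f g P p1 p2 \<longleftrightarrow>
    P \<in> obj K \<and> p1 \<in> hom K P (s1 K f) \<and> p2 \<in> hom K P (s1 K g) \<and>
    comp1 K f p1 = comp1 K g p2 \<and>
    (\<forall>Y\<in>obj K. \<forall>x\<in>hom K Y (s1 K f). \<forall>y\<in>hom K Y (s1 K g). comp1 K f x = comp1 K g y \<longrightarrow>
        (\<exists>!z. z \<in> hom K Y P \<and> comp1 K p1 z = x \<and> comp1 K p2 z = y)) \<and>
    (\<forall>Y\<in>obj K. \<forall>z\<in>hom K Y P. \<forall>z'\<in>hom K Y P. \<forall>\<alpha>\<in>cell2 K (comp1 K p1 z) (comp1 K p1 z').
        \<forall>\<beta>\<in>cell2 K (comp1 K p2 z) (comp1 K p2 z'). wl K f \<alpha> = wl K g \<beta> \<longrightarrow>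
        (\<exists>!\<gamma>. \<gamma> \<in> cell2 K z z' \<and> wl K p1 \<gamma> = \<alpha> \<and> wl K p2 \<gamma> = \<beta>))"

definition is_comma :: "('o,'m,'c) two_cat \<Rightarrow> 'm \<Rightarrow> 'm \<Rightarrow> 'o \<Rightarrow> 'm \<Rightarrow> 'm \<Rightarrow> 'c \<Rightarrow> bool" where
  "is_comma K f g P p q l \<longleftrightarrow>
    P \<in> obj K \<and> p \<in> hom K P (s1 K f) \<and> q \<in> hom K P (s1 K g) \<and>
    l \<in> cell2 K (comp1 K f p) (comp1 K g q) \<and>
    (\<forall>Y\<in>obj K. \<forall>x\<in>hom K Y (s1 K f). \<forall>y\<in>hom K Y (s1 K g).
       \<forall>\<theta>\<in>cell2 K (comp1 K f x) (comp1 K g y).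
        (\<exists>!z. z \<in> hom K Y P \<and> comp1 K p z = x \<and> comp1 K q z = y \<and> wr K l z = \<theta>)) \<and>
    (\<forall>Y\<in>obj K. \<forall>z\<in>hom K Y P. \<forall>z'\<in>hom K Y P. \<forall>\<alpha>\<in>cell2 K (comp1 K p z) (comp1 K p z').
        \<forall>\<beta>\<in>cell2 K (comp1 K q z) (comp1 K q z').
        vcomp K (wl K g \<beta>) (wr K l z) = vcomp K (wr K l z') (wl K f \<alpha>) \<longrightarrow>
        (\<exists>!\<gamma>. \<gamma> \<in> cell2 K z z' \<and> wl K p \<gamma> = \<alpha> \<and> wl K q \<gamma> = \<beta>))"

definition finitely_complete :: "('o,'m,'c) two_cat \<Rightarrow> bool" where
  "finitely_complete K \<longleftrightarrow> two_category K \<and> (\<exists>T. is_terminal K T) \<and>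
    (\<forall>f\<in>arr K. \<forall>g\<in>arr K. t1 K f = t1 K g \<longrightarrow> (\<exists>P p1 p2. is_pullback K f g P p1 p2)) \<and>
    (\<forall>f\<in>arr K. \<forall>g\<in>arr K. t1 K f = t1 K g \<longrightarrow> (\<exists>P p q l. is_comma K f g P p q l))"

definition pb :: "('o,'m,'c) two_cat \<Rightarrow> 'm \<Rightarrow> 'm \<Rightarrow> 'o \<times> 'm \<times> 'm" where
  "pb K f g = (SOME (P, p1, p2). is_pullback K f g P p1 p2)"

definition cm :: "('o,'m,'c) two_cat \<Rightarrow> 'm \<Rightarrow> 'm \<Rightarrow> 'o \<times> 'm \<times> 'm \<times> 'c" where
  "cm K f g = (SOME (P, p, q, l). is_comma K f g P p q l)"

type_synonym ('o, 'm) span = "'m \<times> 'o \<times> 'm"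

definition sd :: "('o,'m) span \<Rightarrow> 'm" where "sd S = fst S"
definition sE :: "('o,'m) span \<Rightarrow> 'o" where "sE S = fst (snd S)"
definition sc :: "('o,'m) span \<Rightarrow> 'm" where "sc S = snd (snd S)"

definition is_span :: "('o,'m,'c) two_cat \<Rightarrow> 'o \<Rightarrow> 'o \<Rightarrow> ('o,'m) span \<Rightarrow> bool" where
  "is_span K A B S \<longleftrightarrow> sE S \<in> obj K \<and> sd S \<in> hom K (sE S) A \<and> sc S \<in> hom K (sE S) B"

definition span_map :: "('o,'m,'c) two_cat \<Rightarrow> ('o,'m) span \<Rightarrow> ('o,'m) span \<Rightarrow> 'm \<Rightarrow> bool" where
  "span_map K S S' m \<longleftrightarrow> m \<in> hom K (sE S) (sE S') \<and>
     comp1 K (sd S') m = sd S \<and> comp1 K (sc S') m = sc S"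

text \<open>span_comp K S1 S2 is the composite S2 o S1 (S1 first), formed by the chosen pullback.\<close>
definition span_comp :: "('o,'m,'c) two_cat \<Rightarrow> ('o,'m) span \<Rightarrow> ('o,'m) span \<Rightarrow> ('o,'m) span" where
  "span_comp K S1 S2 = (case pb K (sc S1) (sd S2) of (P, p1, p2) \<Rightarrow>
      (comp1 K (sd S1) p1, P, comp1 K (sc S2) p2))"

definition span_hmap :: "('o,'m,'c) two_cat \<Rightarrow> ('o,'m) span \<Rightarrow> ('o,'m) span \<Rightarrow>
    ('o,'m) span \<Rightarrow> ('o,'m) span \<Rightarrow> 'm \<Rightarrow> 'm \<Rightarrow> 'm" where
  "span_hmap K S1 S2 T1 T2 m1 m2 = (case pb K (sc S1) (sd S2) of (P, p1, p2) \<Rightarrow>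
     (case pb K (sc T1) (sd T2) of (Q, q1, q2) \<Rightarrow>
       (THE z. z \<in> hom K P Q \<and> comp1 K q1 z = comp1 K m1 p1 \<and> comp1 K q2 z = comp1 K m2 p2)))"

definition span_of :: "('o,'m,'c) two_cat \<Rightarrow> 'm \<Rightarrow> ('o,'m) span" where
  "span_of K f = (ide1 K (s1 K f), s1 K f, f)"

definition span_rev :: "('o,'m,'c) two_cat \<Rightarrow> 'm \<Rightarrow> ('o,'m) span" where
  "span_rev K f = (f, s1 K f, ide1 K (s1 K f))"

definition fslash :: "('o,'m,'c) two_cat \<Rightarrow> 'm \<Rightarrow> ('o,'m) span" where
  "fslash K f = (case cm K f (ide1 K (t1 K f)) of (P, p, q, l) \<Rightarrow> (p, P, q))"

definition slashf :: "('o,'m,'c) two_cat \<Rightarrow> 'm \<Rightarrow> ('o,'m) span" where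
  "slashf K f = (case cm K (ide1 K (t1 K f)) f of (P, p, q, l) \<Rightarrow> (p, P, q))"

definition i_f :: "('o,'m,'c) two_cat \<Rightarrow> 'm \<Rightarrow> 'm" where
  "i_f K f = (case cm K f (ide1 K (t1 K f)) of (P, p, q, l) \<Rightarrow>
     (THE z. z \<in> hom K (s1 K f) P \<and> comp1 K p z = ide1 K (s1 K f) \<and> comp1 K q z = f \<and>
             wr K l z = ide2 K f))"

definition j_f :: "('o,'m,'c) two_cat \<Rightarrow> 'm \<Rightarrow> 'm" where
  "j_f K f = (case cm K (ide1 K (t1 K f)) f of (P, p, q, l) \<Rightarrow>
     (THE z. z \<in> hom K (s1 K f) P \<and> comp1 K p z = f \<and> comp1 K q z = ide1 K (s1 K f) \<and>
             wr K l z = ide2 K f))"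

text \<open>For every object Y, the span of hom-categories K(Y,A) <- K(Y,E) -> K(Y,B)
  (given by postcomposition / whiskering with d and c) is a discrete fibration.\<close>
definition discrete_fibration :: "('o,'m,'c) two_cat \<Rightarrow> 'o \<Rightarrow> 'o \<Rightarrow> ('o,'m) span \<Rightarrow> bool" where
  "discrete_fibration K A B S \<longleftrightarrow> is_span K A B S \<and>
    (\<forall>Y\<in>obj K. \<forall>e\<in>hom K Y (sE S).
      (\<forall>u\<in>cell K. ccod K u = comp1 K (sd S) e \<longrightarrow>
         (\<exists>!ub. ub \<in> cell K \<and> ccod K ub = e \<and> wl K (sd S) ub = u \<and>
                (\<exists>g. wl K (sc S) ub = ide2 K g))) \<and>
      (\<forall>v\<in>cell K. cdom K v = comp1 K (sc S) e \<longrightarrow>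
         (\<exists>!vb. vb \<in> cell K \<and> cdom K vb = e \<and> (\<exists>g. wl K (sd S) vb = ide2 K g) \<and>
                wl K (sc S) vb = v))) \<and>
    (\<forall>Y\<in>obj K. \<forall>h\<in>cell K. cdom K h \<in> hom K Y (sE S) \<longrightarrow>
      (\<exists>a b. a \<in> cell K \<and> ccod K a = ccod K h \<and> wl K (sd S) a = wl K (sd S) h \<and>
             (\<exists>g. wl K (sc S) a = ide2 K g) \<and>
             b \<in> cell K \<and> cdom K b = cdom K h \<and> wl K (sc S) b = wl K (sc S) h \<and>
             (\<exists>g. wl K (sd S) b = ide2 K g) \<and>
             ccod K b = cdom K a \<and> h = vcomp K a b))"

end

theory Submission
  imports Defs
begin

locale tc =
  fixes K :: "('o,'m,'c) two_cat"
  assumes tc: "two_category K"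
begin

lemmas D = tc[unfolded two_category_def]
lemmas ax1 = D[THEN conjunct1]
lemmas ax2 = D[THEN conjunct2, THEN conjunct1]
lemmas ax3 = D[THEN conjunct2, THEN conjunct2, THEN conjunct1]
lemmas ax4 = D[THEN conjunct2, THEN conjunct2, THEN conjunct2, THEN conjunct1]
lemmas ax5 = D[THEN conjunct2, THEN conjunct2, THEN conjunct2, THEN conjunct2, THEN conjunct1]
lemmas ax6 = D[THEN conjunct2, THEN conjunct2, THEN conjunct2, THEN conjunct2, THEN conjunct2, THEN conjunct1]
lemmas ax7 = D[THEN conjunct2, THEN conjunct2, THEN conjunct2, THEN conjunct2, THEN conjunct2, THEN conjunct2, THEN conjunct1]
lemmas ax8 = D[THEN conjunct2, THEN conjunct2, THEN conjunct2, THEN conjunct2, THEN conjunct2, THEN conjunct2, THEN conjunct2, THEN conjunct1]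
lemmas ax9 = D[THEN conjunct2, THEN conjunct2, THEN conjunct2, THEN conjunct2, THEN conjunct2, THEN conjunct2, THEN conjunct2, THEN conjunct2, THEN conjunct1]
lemmas ax10 = D[THEN conjunct2, THEN conjunct2, THEN conjunct2, THEN conjunct2, THEN conjunct2, THEN conjunct2, THEN conjunct2, THEN conjunct2, THEN conjunct2, THEN conjunct1]
lemmas ax11 = D[THEN conjunct2, THEN conjunct2, THEN conjunct2, THEN conjunct2, THEN conjunct2, THEN conjunct2, THEN conjunct2, THEN conjunct2, THEN conjunct2, THEN conjunct2, THEN conjunct1]
lemmas ax12 = D[THEN conjunct2, THEN conjunct2, THEN conjunct2, THEN conjunct2, THEN conjunct2, THEN conjunct2, THEN conjunct2, THEN conjunct2, THEN conjunct2, THEN conjunct2, THEN conjunct2, THEN conjunct1]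
lemmas ax13 = D[THEN conjunct2, THEN conjunct2, THEN conjunct2, THEN conjunct2, THEN conjunct2, THEN conjunct2, THEN conjunct2, THEN conjunct2, THEN conjunct2, THEN conjunct2, THEN conjunct2, THEN conjunct2, THEN conjunct1]
lemmas ax14 = D[THEN conjunct2, THEN conjunct2, THEN conjunct2, THEN conjunct2, THEN conjunct2, THEN conjunct2, THEN conjunct2, THEN conjunct2, THEN conjunct2, THEN conjunct2, THEN conjunct2, THEN conjunct2, THEN conjunct2, THEN conjunct1]
lemmas ax15 = D[THEN conjunct2, THEN conjunct2, THEN conjunct2, THEN conjunct2, THEN conjunct2, THEN conjunct2, THEN conjunct2, THEN conjunct2, THEN conjunct2, THEN conjunct2, THEN conjunct2, THEN conjunct2, THEN conjunct2, THEN conjunct2]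

lemma obj_s1 [simp]: "f \<in> arr K \<Longrightarrow> s1 K f \<in> obj K"
  and obj_t1 [simp]: "f \<in> arr K \<Longrightarrow> t1 K f \<in> obj K"
  using ax1 by auto

lemma ide1_arr [simp]: "a \<in> obj K \<Longrightarrow> ide1 K a \<in> arr K"
  and ide1_s1 [simp]: "a \<in> obj K \<Longrightarrow> s1 K (ide1 K a) = a"
  and ide1_t1 [simp]: "a \<in> obj K \<Longrightarrow> t1 K (ide1 K a) = a"
  using ax2 unfolding hom_def by auto

lemma comp_arr [simp]: "f \<in> arr K \<Longrightarrow> g \<in> arr K \<Longrightarrow> t1 K f = s1 K g \<Longrightarrow> comp1 K g f \<in> arr K"
  and comp_s1 [simp]: "f \<in> arr K \<Longrightarrow> g \<in> arr K \<Longrightarrow> t1 K f = s1 K g \<Longrightarrow> s1 K (comp1 K g f) = s1 K f"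
  and comp_t1 [simp]: "f \<in> arr K \<Longrightarrow> g \<in> arr K \<Longrightarrow> t1 K f = s1 K g \<Longrightarrow> t1 K (comp1 K g f) = t1 K g"
  using ax3 unfolding hom_def by auto

lemma assoc [simp]: "f \<in> arr K \<Longrightarrow> g \<in> arr K \<Longrightarrow> h \<in> arr K \<Longrightarrow> t1 K f = s1 K g \<Longrightarrow> t1 K g = s1 K h \<Longrightarrow>
   comp1 K (comp1 K h g) f = comp1 K h (comp1 K g f)"
  using ax4 by metis

lemma comp_ide_l [simp]: "f \<in> arr K \<Longrightarrow> t1 K f = b \<Longrightarrow> comp1 K (ide1 K b) f = f"
  and comp_ide_r [simp]: "f \<in> arr K \<Longrightarrow> s1 K f = a \<Longrightarrow> comp1 K f (ide1 K a) = f"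
  using ax5 by auto

lemma cdom_arr [simp]: "\<alpha> \<in> cell K \<Longrightarrow> cdom K \<alpha> \<in> arr K"
  and ccod_arr [simp]: "\<alpha> \<in> cell K \<Longrightarrow> ccod K \<alpha> \<in> arr K"
  and s1_ccod [simp]: "\<alpha> \<in> cell K \<Longrightarrow> s1 K (ccod K \<alpha>) = s1 K (cdom K \<alpha>)"
  and t1_ccod [simp]: "\<alpha> \<in> cell K \<Longrightarrow> t1 K (ccod K \<alpha>) = t1 K (cdom K \<alpha>)"
  using ax6 by auto

lemma ide2_cell [simp]: "f \<in> arr K \<Longrightarrow> ide2 K f \<in> cell K"
  and ide2_cdom [simp]: "f \<in> arr K \<Longrightarrow> cdom K (ide2 K f) = f"
  and ide2_ccod [simp]: "f \<in> arr K \<Longrightarrow> ccod K (ide2 K f) = f"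
  using ax7 unfolding cell2_def by auto

lemma vcomp_cell [simp]: "\<alpha> \<in> cell K \<Longrightarrow> \<beta> \<in> cell K \<Longrightarrow> ccod K \<alpha> = cdom K \<beta> \<Longrightarrow> vcomp K \<beta> \<alpha> \<in> cell K"
  and vcomp_cdom [simp]: "\<alpha> \<in> cell K \<Longrightarrow> \<beta> \<in> cell K \<Longrightarrow> ccod K \<alpha> = cdom K \<beta> \<Longrightarrow> cdom K (vcomp K \<beta> \<alpha>) = cdom K \<alpha>"
  and vcomp_ccod [simp]: "\<alpha> \<in> cell K \<Longrightarrow> \<beta> \<in> cell K \<Longrightarrow> ccod K \<alpha> = cdom K \<beta> \<Longrightarrow> ccod K (vcomp K \<beta> \<alpha>) = ccod K \<beta>"
  using ax8 unfolding cell2_def by auto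

lemma vcomp_ide_l [simp]: "\<alpha> \<in> cell K \<Longrightarrow> ccod K \<alpha> = g \<Longrightarrow> vcomp K (ide2 K g) \<alpha> = \<alpha>"
  and vcomp_ide_r [simp]: "\<alpha> \<in> cell K \<Longrightarrow> cdom K \<alpha> = g \<Longrightarrow> vcomp K \<alpha> (ide2 K g) = \<alpha>"
  using ax10 by auto

lemma hcomp_cell: "\<alpha> \<in> cell K \<Longrightarrow> \<beta> \<in> cell K \<Longrightarrow> t1 K (cdom K \<alpha>) = s1 K (cdom K \<beta>) \<Longrightarrow>
   hcomp K \<beta> \<alpha> \<in> cell K \<and> cdom K (hcomp K \<beta> \<alpha>) = comp1 K (cdom K \<beta>) (cdom K \<alpha>) \<and>
   ccod K (hcomp K \<beta> \<alpha>) = comp1 K (ccod K \<beta>) (ccod K \<alpha>)"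
  using ax11 unfolding cell2_def by auto

lemma hassoc: "\<alpha> \<in> cell K \<Longrightarrow> \<beta> \<in> cell K \<Longrightarrow> \<gamma> \<in> cell K \<Longrightarrow>
        t1 K (cdom K \<alpha>) = s1 K (cdom K \<beta>) \<Longrightarrow> t1 K (cdom K \<beta>) = s1 K (cdom K \<gamma>) \<Longrightarrow>
        hcomp K \<gamma> (hcomp K \<beta> \<alpha>) = hcomp K (hcomp K \<gamma> \<beta>) \<alpha>"
  using ax12 by metis

lemma hunit_l: "\<alpha> \<in> cell K \<Longrightarrow> hcomp K (ide2 K (ide1 K (t1 K (cdom K \<alpha>)))) \<alpha> = \<alpha>"
  and hunit_r: "\<alpha> \<in> cell K \<Longrightarrow> hcomp K \<alpha> (ide2 K (ide1 K (s1 K (cdom K \<alpha>)))) = \<alpha>"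
  using ax13 by auto

lemma hide2: "f \<in> arr K \<Longrightarrow> g \<in> arr K \<Longrightarrow> t1 K f = s1 K g \<Longrightarrow>
        hcomp K (ide2 K g) (ide2 K f) = ide2 K (comp1 K g f)"
  using ax14 by auto

lemma interchange: "\<alpha> \<in> cell K \<Longrightarrow> \<alpha>' \<in> cell K \<Longrightarrow> \<beta> \<in> cell K \<Longrightarrow> \<beta>' \<in> cell K \<Longrightarrow>
        ccod K \<alpha> = cdom K \<alpha>' \<Longrightarrow> ccod K \<beta> = cdom K \<beta>' \<Longrightarrow> t1 K (cdom K \<alpha>) = s1 K (cdom K \<beta>) \<Longrightarrow>
        hcomp K (vcomp K \<beta>' \<beta>) (vcomp K \<alpha>' \<alpha>) = vcomp K (hcomp K \<beta>' \<alpha>') (hcomp K \<beta> \<alpha>)"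
  using ax15 by metis

lemma wl_cell [simp]: "g \<in> arr K \<Longrightarrow> \<alpha> \<in> cell K \<Longrightarrow> t1 K (cdom K \<alpha>) = s1 K g \<Longrightarrow> wl K g \<alpha> \<in> cell K"
  and wl_cdom [simp]: "g \<in> arr K \<Longrightarrow> \<alpha> \<in> cell K \<Longrightarrow> t1 K (cdom K \<alpha>) = s1 K g \<Longrightarrow> cdom K (wl K g \<alpha>) = comp1 K g (cdom K \<alpha>)"
  and wl_ccod [simp]: "g \<in> arr K \<Longrightarrow> \<alpha> \<in> cell K \<Longrightarrow> t1 K (cdom K \<alpha>) = s1 K g \<Longrightarrow> ccod K (wl K g \<alpha>) = comp1 K g (ccod K \<alpha>)"
  using hcomp_cell[of \<alpha> "ide2 K g"] unfolding wl_def by auto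

lemma wr_cell [simp]: "f \<in> arr K \<Longrightarrow> \<alpha> \<in> cell K \<Longrightarrow> t1 K f = s1 K (cdom K \<alpha>) \<Longrightarrow> wr K \<alpha> f \<in> cell K"
  and wr_cdom [simp]: "f \<in> arr K \<Longrightarrow> \<alpha> \<in> cell K \<Longrightarrow> t1 K f = s1 K (cdom K \<alpha>) \<Longrightarrow> cdom K (wr K \<alpha> f) = comp1 K (cdom K \<alpha>) f"
  and wr_ccod [simp]: "f \<in> arr K \<Longrightarrow> \<alpha> \<in> cell K \<Longrightarrow> t1 K f = s1 K (cdom K \<alpha>) \<Longrightarrow> ccod K (wr K \<alpha> f) = comp1 K (ccod K \<alpha>) f"
  using hcomp_cell[of "ide2 K f" \<alpha>] unfolding wr_def by auto

lemma wl_ide2 [simp]: "f \<in> arr K \<Longrightarrow> g \<in> arr K \<Longrightarrow> t1 K f = s1 K g \<Longrightarrow> wl K g (ide2 K f) = ide2 K (comp1 K g f)"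
  and wr_ide2 [simp]: "f \<in> arr K \<Longrightarrow> g \<in> arr K \<Longrightarrow> t1 K f = s1 K g \<Longrightarrow> wr K (ide2 K g) f = ide2 K (comp1 K g f)"
  unfolding wl_def wr_def by (auto simp: hide2)

lemma wl_wl [simp]: "\<alpha> \<in> cell K \<Longrightarrow> h \<in> arr K \<Longrightarrow> g \<in> arr K \<Longrightarrow> t1 K (cdom K \<alpha>) = s1 K h \<Longrightarrow> t1 K h = s1 K g \<Longrightarrow>
   wl K g (wl K h \<alpha>) = wl K (comp1 K g h) \<alpha>"
  unfolding wl_def by (simp add: hassoc hide2)

lemma wr_wr [simp]: "\<alpha> \<in> cell K \<Longrightarrow> f \<in> arr K \<Longrightarrow> g \<in> arr K \<Longrightarrow> t1 K f = s1 K (cdom K \<alpha>) \<Longrightarrow> t1 K g = s1 K f \<Longrightarrow>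
   wr K (wr K \<alpha> f) g = wr K \<alpha> (comp1 K f g)"
  unfolding wr_def by (subst hassoc[symmetric]) (auto simp: hide2)

lemma wl_wr [simp]: "\<alpha> \<in> cell K \<Longrightarrow> f \<in> arr K \<Longrightarrow> g \<in> arr K \<Longrightarrow> t1 K f = s1 K (cdom K \<alpha>) \<Longrightarrow> t1 K (cdom K \<alpha>) = s1 K g \<Longrightarrow>
   wl K g (wr K \<alpha> f) = wr K (wl K g \<alpha>) f"
  unfolding wr_def wl_def by (simp add: hassoc)

lemma wl_id [simp]: "\<alpha> \<in> cell K \<Longrightarrow> t1 K (cdom K \<alpha>) = b \<Longrightarrow> wl K (ide1 K b) \<alpha> = \<alpha>"
  unfolding wl_def using hunit_l by auto

lemma wr_id [simp]: "\<alpha> \<in> cell K \<Longrightarrow> s1 K (cdom K \<alpha>) = a \<Longrightarrow> wr K \<alpha> (ide1 K a) = \<alpha>"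
  unfolding wr_def using hunit_r by auto

lemma wl_vcomp: "\<alpha> \<in> cell K \<Longrightarrow> \<beta> \<in> cell K \<Longrightarrow> ccod K \<alpha> = cdom K \<beta> \<Longrightarrow> g \<in> arr K \<Longrightarrow> t1 K (cdom K \<alpha>) = s1 K g \<Longrightarrow>
   wl K g (vcomp K \<beta> \<alpha>) = vcomp K (wl K g \<beta>) (wl K g \<alpha>)"
proof -
  assume a: "\<alpha> \<in> cell K" "\<beta> \<in> cell K" "ccod K \<alpha> = cdom K \<beta>" "g \<in> arr K" "t1 K (cdom K \<alpha>) = s1 K g"
  have "ide2 K g = vcomp K (ide2 K g) (ide2 K g)" using a by simp
  then have "wl K g (vcomp K \<beta> \<alpha>) = hcomp K (vcomp K (ide2 K g) (ide2 K g)) (vcomp K \<beta> \<alpha>)"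
    unfolding wl_def by simp
  also have "\<dots> = vcomp K (wl K g \<beta>) (wl K g \<alpha>)"
    unfolding wl_def using a by (intro interchange) auto
  finally show ?thesis .
qed

lemma wr_vcomp: "\<alpha> \<in> cell K \<Longrightarrow> \<beta> \<in> cell K \<Longrightarrow> ccod K \<alpha> = cdom K \<beta> \<Longrightarrow> f \<in> arr K \<Longrightarrow> t1 K f = s1 K (cdom K \<alpha>) \<Longrightarrow>
   wr K (vcomp K \<beta> \<alpha>) f = vcomp K (wr K \<beta> f) (wr K \<alpha> f)"
proof -
  assume a: "\<alpha> \<in> cell K" "\<beta> \<in> cell K" "ccod K \<alpha> = cdom K \<beta>" "f \<in> arr K" "t1 K f = s1 K (cdom K \<alpha>)"
  have "ide2 K f = vcomp K (ide2 K f) (ide2 K f)" using a by simp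
  then have "wr K (vcomp K \<beta> \<alpha>) f = hcomp K (vcomp K \<beta> \<alpha>) (vcomp K (ide2 K f) (ide2 K f))"
    unfolding wr_def by simp
  also have "\<dots> = vcomp K (wr K \<beta> f) (wr K \<alpha> f)"
    unfolding wr_def using a by (intro interchange) auto
  finally show ?thesis .
qed

lemma df_span: "discrete_fibration K A B S \<Longrightarrow> is_span K A B S"
  unfolding discrete_fibration_def by blast

lemma df_lift1: "discrete_fibration K A B S \<Longrightarrow> Y \<in> obj K \<Longrightarrow> e \<in> hom K Y (sE S) \<Longrightarrow>
   u \<in> cell K \<Longrightarrow> ccod K u = comp1 K (sd S) e \<Longrightarrow>
   \<exists>!ub. ub \<in> cell K \<and> ccod K ub = e \<and> wl K (sd S) ub = u \<and> (\<exists>g. wl K (sc S) ub = ide2 K g)"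
  unfolding discrete_fibration_def by blast

lemma df_lift2: "discrete_fibration K A B S \<Longrightarrow> Y \<in> obj K \<Longrightarrow> e \<in> hom K Y (sE S) \<Longrightarrow>
   v \<in> cell K \<Longrightarrow> cdom K v = comp1 K (sc S) e \<Longrightarrow>
   \<exists>!vb. vb \<in> cell K \<and> cdom K vb = e \<and> (\<exists>g. wl K (sd S) vb = ide2 K g) \<and> wl K (sc S) vb = v"
  unfolding discrete_fibration_def by blast

lemma df_iii: "discrete_fibration K A B S \<Longrightarrow> Y \<in> obj K \<Longrightarrow> hh \<in> cell K \<Longrightarrow> cdom K hh \<in> hom K Y (sE S) \<Longrightarrow>
      (\<exists>a b. a \<in> cell K \<and> ccod K a = ccod K hh \<and> wl K (sd S) a = wl K (sd S) hh \<and>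
             (\<exists>g. wl K (sc S) a = ide2 K g) \<and>
             b \<in> cell K \<and> cdom K b = cdom K hh \<and> wl K (sc S) b = wl K (sc S) hh \<and>
             (\<exists>g. wl K (sd S) b = ide2 K g) \<and>
             ccod K b = cdom K a \<and> hh = vcomp K a b)"
  unfolding discrete_fibration_def by blast

lemma core1:
  assumes df: "discrete_fibration K X B S2"
  and P: "P \<in> obj K" and h: "h \<in> hom K Q P" and r: "r \<in> hom K P Q" and rh: "comp1 K r h = ide1 K Q"
  and D: "D \<in> hom K P X" and C: "C \<in> hom K P B"
  and \<sigma>: "\<sigma> \<in> cell2 K (comp1 K h r) (ide1 K P)"
  and D\<sigma>: "wl K D \<sigma> = ide2 K D" and C\<sigma>: "wr K (wl K C \<sigma>) h = ide2 K (comp1 K C h)"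
  and \<phi>: "\<phi> \<in> hom K Q (sE S2)" and \<phi>d: "comp1 K (sd S2) \<phi> = comp1 K D h"
  and \<phi>c: "comp1 K (sc S2) \<phi> = comp1 K C h"
  shows "\<exists>!\<psi>. \<psi> \<in> hom K P (sE S2) \<and> comp1 K (sd S2) \<psi> = D \<and> comp1 K (sc S2) \<psi> = C \<and> comp1 K \<psi> h = \<phi>"
proof -
  obtain d2 E2 c2 where S2: "S2 = (d2, E2, c2)" by (cases S2) auto
  have sp: "E2 \<in> obj K" "d2 \<in> hom K E2 X" "c2 \<in> hom K E2 B"
    using df_span[OF df] unfolding is_span_def S2 sd_def sE_def sc_def by auto
  note df' = df[unfolded S2]
  have [simp]: "sd (d2, E2, c2) = d2" "sE (d2, E2, c2) = E2" "sc (d2, E2, c2) = c2"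
    unfolding sd_def sE_def sc_def by auto
  have Q: "Q \<in> obj K" using h unfolding hom_def by (auto dest: obj_s1)
  have ar: "h \<in> arr K" "r \<in> arr K" "D \<in> arr K" "C \<in> arr K" "\<phi> \<in> arr K" "d2 \<in> arr K" "c2 \<in> arr K"
    and ty: "s1 K h = Q" "t1 K h = P" "s1 K r = P" "t1 K r = Q" "s1 K D = P" "t1 K D = X"
       "s1 K C = P" "t1 K C = B" "s1 K \<phi> = Q" "t1 K \<phi> = E2" "s1 K d2 = E2" "t1 K d2 = X"
       "s1 K c2 = E2" "t1 K c2 = B"
    using h r D C \<phi> sp unfolding hom_def S2 by simp_all
  have sg: "\<sigma> \<in> cell K" "cdom K \<sigma> = comp1 K h r" "ccod K \<sigma> = ide1 K P"
    using \<sigma> unfolding cell2_def by simp_all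
  note [simp] = ar ty sg P Q
  have \<phi>c': "comp1 K c2 \<phi> = comp1 K C h" and \<phi>d': "comp1 K d2 \<phi> = comp1 K D h" using \<phi>c \<phi>d S2 by simp_all
  define e where "e = comp1 K \<phi> r"
  have e: "e \<in> hom K P E2" unfolding e_def hom_def by simp
  define \<Lambda> where "\<Lambda> = wl K C \<sigma>"
  have \<Lambda>: "\<Lambda> \<in> cell K" "ccod K \<Lambda> = C" unfolding \<Lambda>_def by simp_all
  have "cdom K \<Lambda> = comp1 K C (comp1 K h r)" unfolding \<Lambda>_def by simp
  also have "\<dots> = comp1 K (comp1 K C h) r" by simp
  also have "\<dots> = comp1 K (comp1 K c2 \<phi>) r" using \<phi>c' by simp
  also have "\<dots> = comp1 K c2 e" unfolding e_def by simp
  finally have \<Lambda>d: "cdom K \<Lambda> = comp1 K c2 e" .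
  have ex1: "\<exists>!vb. vb \<in> cell K \<and> cdom K vb = e \<and> (\<exists>g. wl K d2 vb = ide2 K g) \<and> wl K c2 vb = \<Lambda>"
    using df_lift2[OF df' P, of e \<Lambda>] e \<Lambda> \<Lambda>d by simp
  then obtain vb g where vb: "vb \<in> cell K" "cdom K vb = e" "wl K d2 vb = ide2 K g" "wl K c2 vb = \<Lambda>"
    by blast
  have U: "\<And>w. w \<in> cell K \<Longrightarrow> cdom K w = e \<Longrightarrow> (\<exists>g. wl K d2 w = ide2 K g) \<Longrightarrow> wl K c2 w = \<Lambda> \<Longrightarrow> w = vb"
    using ex1 vb by blast
  have e2: "e \<in> arr K" "s1 K e = P" "t1 K e = E2" using e unfolding hom_def by auto
  define \<psi> where "\<psi> = ccod K vb"
  have vbt: "t1 K (cdom K vb) = s1 K d2" "t1 K (cdom K vb) = s1 K c2" "s1 K (cdom K vb) = P"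
    "t1 K (cdom K vb) = E2" using vb(2) e2 by simp_all
  have sdS: "sd S2 = d2" "sc S2 = c2" "sE S2 = E2" using S2 by simp_all
  have "cdom K vb \<in> hom K P (sE S2)" using vb(2) e sdS by simp
  from df_iii[OF df P vb(1) this, unfolded sdS] obtain a b where
    "a \<in> cell K \<and> ccod K a = ccod K vb \<and> wl K d2 a = wl K d2 vb \<and>
             (\<exists>g. wl K c2 a = ide2 K g) \<and>
             b \<in> cell K \<and> cdom K b = cdom K vb \<and> wl K c2 b = wl K c2 vb \<and>
             (\<exists>g. wl K d2 b = ide2 K g) \<and>
             ccod K b = cdom K a \<and> vb = vcomp K a b" by blast
  then have ab0: "a \<in> cell K" "ccod K a = ccod K vb" "wl K d2 a = wl K d2 vb"
     "b \<in> cell K" "cdom K b = cdom K vb" "wl K c2 b = wl K c2 vb" "\<exists>g. wl K d2 b = ide2 K g"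
     "ccod K b = cdom K a" "vb = vcomp K a b" by blast+
  have ab: "a \<in> cell K" "ccod K a = \<psi>" "wl K d2 a = wl K d2 vb"
     "b \<in> cell K" "cdom K b = e" "wl K c2 b = \<Lambda>" "\<exists>g. wl K d2 b = ide2 K g"
     "ccod K b = cdom K a" "vb = vcomp K a b"
    using ab0(1,3,4,7,8,9) apply (simp_all only: \<psi>_def)
    using ab0(2) apply simp
    using ab0(5) vb(2) apply simp
    using ab0(6) vb(4) apply simp
    done
  have "b = vb" using U ab(4-7) by blast
  then have a: "a \<in> cell K" "cdom K a = \<psi>" "ccod K a = \<psi>" "wl K d2 a = wl K d2 vb" "vb = vcomp K a vb"
    using ab(1,2,3,8,9) unfolding \<psi>_def by (simp_all only:)
  have \<psi>a: "\<psi> \<in> arr K" "s1 K \<psi> = P" "t1 K \<psi> = E2" unfolding \<psi>_def using vb e2 by auto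
  have at: "t1 K (cdom K a) = s1 K d2" "t1 K (cdom K a) = s1 K c2" "s1 K (cdom K a) = P"
    using a(1-4) \<psi>a by auto
  have DhR: "comp1 K D (comp1 K h r) = D"
    using arg_cong[OF D\<sigma>, of "cdom K"] by simp
  have \<psi>h: "\<psi> \<in> hom K P (sE S2)" using \<psi>a unfolding hom_def S2 by simp
  have \<psi>d: "comp1 K d2 \<psi> = D"
  proof -
    have "comp1 K d2 \<psi> = cdom K (wl K d2 a)" using a(1-3) at by simp
    also have "\<dots> = cdom K (wl K d2 vb)" using a(1-4) by simp
    also have "\<dots> = comp1 K d2 (comp1 K \<phi> r)" using vb(1,2) vbt e_def by simp
    also have "\<dots> = comp1 K (comp1 K d2 \<phi>) r" by simp
    also have "\<dots> = comp1 K D (comp1 K h r)" using \<phi>d' by simp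
    finally show ?thesis using DhR by simp
  qed
  have \<psi>c: "comp1 K c2 \<psi> = C"
    using arg_cong[OF vb(4), of "ccod K"] vb(1,2) vbt \<Lambda> unfolding \<psi>_def by simp
  have \<psi>\<phi>: "comp1 K \<psi> h = \<phi>"
  proof -
    define w where "w = wr K vb h"
    define a' where "a' = wr K a h"
    have w: "w \<in> cell K" "cdom K w = \<phi>" "ccod K w = comp1 K \<psi> h"
      unfolding w_def \<psi>_def using vb(1,2) vbt e_def rh by simp_all
    have a': "a' \<in> cell K" "ccod K a' = comp1 K \<psi> h" "cdom K a' = comp1 K \<psi> h"
      unfolding a'_def using a(1-4) at by simp_all
    have wd: "wl K d2 w = wr K (wl K d2 vb) h" unfolding w_def using vb(1,2) vbt by simp
    have a'd: "wl K d2 a' = wr K (wl K d2 vb) h" unfolding a'_def using a(1-4) at by simp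
    have wc: "wl K c2 w = ide2 K (comp1 K C h)" unfolding w_def using vb(1,2,4) vbt \<Lambda>_def C\<sigma> by simp
    have "wl K c2 vb = wl K c2 (vcomp K a vb)" using a(5) by (rule arg_cong)
    also have "\<dots> = vcomp K (wl K c2 a) (wl K c2 vb)"
      by (rule wl_vcomp) (use a(1-3) vb(1,2) vbt \<psi>_def in simp_all)
    finally have yv0: "wl K c2 vb = vcomp K (wl K c2 a) (wl K c2 vb)" .
    have yv: "vcomp K (wl K c2 a) \<Lambda> = \<Lambda>" using yv0[symmetric] unfolding vb(4) .
    have W\<Lambda>: "wr K \<Lambda> h = ide2 K (comp1 K C h)" using C\<sigma> \<Lambda>_def by simp
    have ya: "wl K c2 a \<in> cell K" "cdom K (wl K c2 a) = C" "ccod K (wl K c2 a) = C"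
      using a(1-3) at \<psi>c by simp_all
    have "ide2 K (comp1 K C h) = wr K \<Lambda> h" using W\<Lambda> by simp
    also have "\<dots> = wr K (vcomp K (wl K c2 a) \<Lambda>) h" by (simp only: yv)
    also have "\<dots> = vcomp K (wr K (wl K c2 a) h) (wr K \<Lambda> h)"
      by (rule wr_vcomp) (use ya \<Lambda> \<Lambda>d e2 in simp_all)
    also have "\<dots> = vcomp K (wr K (wl K c2 a) h) (ide2 K (comp1 K C h))" using W\<Lambda> by simp
    also have "\<dots> = wr K (wl K c2 a) h" using ya by simp
    finally have a'c: "wl K c2 a' = ide2 K (comp1 K C h)"
      unfolding a'_def using a(1-3) at by simp
    have xd: "wl K d2 vb \<in> cell K" "cdom K (wl K d2 vb) = comp1 K d2 e" "ccod K (wl K d2 vb) = comp1 K d2 \<psi>"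
      using vb(1,2) e2 \<psi>_def by simp_all
    have xh: "wr K (wl K d2 vb) h \<in> cell K" "ccod K (wr K (wl K d2 vb) h) = comp1 K d2 (comp1 K \<psi> h)"
      using xd e2 \<psi>a by simp_all
    have ex: "\<exists>!ub. ub \<in> cell K \<and> ccod K ub = comp1 K \<psi> h \<and> wl K d2 ub = wr K (wl K d2 vb) h \<and> (\<exists>g. wl K c2 ub = ide2 K g)"
      using df_lift1[OF df Q, of "comp1 K \<psi> h" "wr K (wl K d2 vb) h", unfolded sdS] \<psi>a xh
      by (simp add: hom_def)
    have "w = a'" using ex w a' wd a'd wc a'c by blast
    then have "cdom K w = cdom K a'" by simp
    then show ?thesis using w a' by simp
  qed
  show ?thesis
  proof (rule ex1I[of _ \<psi>])
    show "\<psi> \<in> hom K P (sE S2) \<and> comp1 K (sd S2) \<psi> = D \<and> comp1 K (sc S2) \<psi> = C \<and> comp1 K \<psi> h = \<phi>"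
      using \<psi>h \<psi>d \<psi>c \<psi>\<phi> sdS by simp
  next
    fix \<psi>' assume as: "\<psi>' \<in> hom K P (sE S2) \<and> comp1 K (sd S2) \<psi>' = D \<and> comp1 K (sc S2) \<psi>' = C \<and> comp1 K \<psi>' h = \<phi>"
    have pa: "\<psi>' \<in> arr K" "s1 K \<psi>' = P" "t1 K \<psi>' = E2" "comp1 K d2 \<psi>' = D" "comp1 K c2 \<psi>' = C" "comp1 K \<psi>' h = \<phi>"
      using as sdS unfolding hom_def by auto
    define \<omega> where "\<omega> = wl K \<psi>' \<sigma>"
    have \<omega>: "\<omega> \<in> cell K" unfolding \<omega>_def using pa by simp
    have "cdom K \<omega> = comp1 K \<psi>' (comp1 K h r)" unfolding \<omega>_def using pa by simp
    also have "\<dots> = comp1 K (comp1 K \<psi>' h) r" using pa(1-3) by simp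
    finally have \<omega>d: "cdom K \<omega> = e" using pa(6) e_def by simp
    have "wl K d2 \<omega> = wl K (comp1 K d2 \<psi>') \<sigma>" unfolding \<omega>_def using pa(1-3) by simp
    then have "wl K d2 \<omega> = ide2 K D" using D\<sigma> pa(4) by simp
    then have \<omega>1: "\<exists>g. wl K d2 \<omega> = ide2 K g" by blast
    have "wl K c2 \<omega> = wl K (comp1 K c2 \<psi>') \<sigma>" unfolding \<omega>_def using pa(1-3) by simp
    then have \<omega>2: "wl K c2 \<omega> = \<Lambda>" unfolding \<Lambda>_def using pa(5) by simp
    have "\<omega> = vb" using U \<omega> \<omega>d \<omega>1 \<omega>2 by blast
    then have "ccod K \<omega> = \<psi>" unfolding \<psi>_def by simp
    then show "\<psi>' = \<psi>" unfolding \<omega>_def using pa by simp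
  qed
qed

lemma core2:
  assumes df: "discrete_fibration K B X S2"
  and P: "P \<in> obj K" and h: "h \<in> hom K Q P" and r: "r \<in> hom K P Q" and rh: "comp1 K r h = ide1 K Q"
  and D: "D \<in> hom K P B" and C: "C \<in> hom K P X"
  and \<sigma>: "\<sigma> \<in> cell2 K (ide1 K P) (comp1 K h r)"
  and C\<sigma>: "wl K C \<sigma> = ide2 K C" and D\<sigma>: "wr K (wl K D \<sigma>) h = ide2 K (comp1 K D h)"
  and \<phi>: "\<phi> \<in> hom K Q (sE S2)" and \<phi>d: "comp1 K (sd S2) \<phi> = comp1 K D h"
  and \<phi>c: "comp1 K (sc S2) \<phi> = comp1 K C h"
  shows "\<exists>!\<psi>. \<psi> \<in> hom K P (sE S2) \<and> comp1 K (sd S2) \<psi> = D \<and> comp1 K (sc S2) \<psi> = C \<and> comp1 K \<psi> h = \<phi>"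
proof -
  obtain d2 E2 c2 where S2: "S2 = (d2, E2, c2)" by (cases S2) auto
  have sp: "E2 \<in> obj K" "d2 \<in> hom K E2 B" "c2 \<in> hom K E2 X"
    using df_span[OF df] unfolding is_span_def S2 sd_def sE_def sc_def by auto
  have sdS: "sd S2 = d2" "sc S2 = c2" "sE S2 = E2" using S2 unfolding sd_def sE_def sc_def by simp_all
  note df' = df[unfolded S2]
  have [simp]: "sd (d2, E2, c2) = d2" "sE (d2, E2, c2) = E2" "sc (d2, E2, c2) = c2"
    unfolding sd_def sE_def sc_def by auto
  have Q: "Q \<in> obj K" using h unfolding hom_def by (auto dest: obj_s1)
  have ar: "h \<in> arr K" "r \<in> arr K" "D \<in> arr K" "C \<in> arr K" "\<phi> \<in> arr K" "d2 \<in> arr K" "c2 \<in> arr K"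
    and ty: "s1 K h = Q" "t1 K h = P" "s1 K r = P" "t1 K r = Q" "s1 K D = P" "t1 K D = B"
       "s1 K C = P" "t1 K C = X" "s1 K \<phi> = Q" "t1 K \<phi> = E2" "s1 K d2 = E2" "t1 K d2 = B"
       "s1 K c2 = E2" "t1 K c2 = X"
    using h r D C \<phi> sp unfolding hom_def S2 by simp_all
  have sg: "\<sigma> \<in> cell K" "cdom K \<sigma> = ide1 K P" "ccod K \<sigma> = comp1 K h r"
    using \<sigma> unfolding cell2_def by simp_all
  note [simp] = ar ty sg P Q
  have \<phi>c': "comp1 K c2 \<phi> = comp1 K C h" and \<phi>d': "comp1 K d2 \<phi> = comp1 K D h" using \<phi>c \<phi>d S2 by simp_all
  define e where "e = comp1 K \<phi> r"
  have e: "e \<in> hom K P E2" unfolding e_def hom_def by simp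
  have e2: "e \<in> arr K" "s1 K e = P" "t1 K e = E2" using e unfolding hom_def by auto
  define \<Lambda> where "\<Lambda> = wl K D \<sigma>"
  have \<Lambda>: "\<Lambda> \<in> cell K" "cdom K \<Lambda> = D" unfolding \<Lambda>_def by simp_all
  have "ccod K \<Lambda> = comp1 K D (comp1 K h r)" unfolding \<Lambda>_def by simp
  also have "\<dots> = comp1 K (comp1 K D h) r" by simp
  also have "\<dots> = comp1 K (comp1 K d2 \<phi>) r" using \<phi>d' by simp
  also have "\<dots> = comp1 K d2 e" unfolding e_def by simp
  finally have \<Lambda>d: "ccod K \<Lambda> = comp1 K d2 e" .
  have ex1: "\<exists>!ub. ub \<in> cell K \<and> ccod K ub = e \<and> wl K d2 ub = \<Lambda> \<and> (\<exists>g. wl K c2 ub = ide2 K g)"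
    using df_lift1[OF df' P, of e \<Lambda>] e \<Lambda> \<Lambda>d by simp
  then obtain ub g where ub: "ub \<in> cell K" "ccod K ub = e" "wl K d2 ub = \<Lambda>" "wl K c2 ub = ide2 K g"
    by blast
  have U: "\<And>w. w \<in> cell K \<Longrightarrow> ccod K w = e \<Longrightarrow> wl K d2 w = \<Lambda> \<Longrightarrow> (\<exists>g. wl K c2 w = ide2 K g) \<Longrightarrow> w = ub"
    using ex1 ub by blast
  define \<psi> where "\<psi> = cdom K ub"
  have \<psi>a: "\<psi> \<in> arr K" "s1 K \<psi> = P" "t1 K \<psi> = E2" unfolding \<psi>_def using ub(1,2) e2
    by (metis cdom_arr s1_ccod t1_ccod)+
  have ubt: "t1 K (cdom K ub) = s1 K d2" "t1 K (cdom K ub) = s1 K c2" "s1 K (cdom K ub) = P"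
    "t1 K (cdom K ub) = E2" using \<psi>a \<psi>_def by simp_all
  have "cdom K ub \<in> hom K P (sE S2)" using \<psi>a \<psi>_def sdS unfolding hom_def by simp
  from df_iii[OF df P ub(1) this, unfolded sdS] obtain a b where
    "a \<in> cell K \<and> ccod K a = ccod K ub \<and> wl K d2 a = wl K d2 ub \<and>
             (\<exists>g. wl K c2 a = ide2 K g) \<and>
             b \<in> cell K \<and> cdom K b = cdom K ub \<and> wl K c2 b = wl K c2 ub \<and>
             (\<exists>g. wl K d2 b = ide2 K g) \<and>
             ccod K b = cdom K a \<and> ub = vcomp K a b" by blast
  then have ab0: "a \<in> cell K" "ccod K a = ccod K ub" "wl K d2 a = wl K d2 ub" "\<exists>g. wl K c2 a = ide2 K g"
     "b \<in> cell K" "cdom K b = cdom K ub" "wl K c2 b = wl K c2 ub"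
     "ccod K b = cdom K a" "ub = vcomp K a b" by blast+
  have ab: "a \<in> cell K" "ccod K a = e" "wl K d2 a = \<Lambda>" "\<exists>g. wl K c2 a = ide2 K g"
    using ab0(1,4) apply (simp_all only:)
    using ab0(2) ub(2) apply simp
    using ab0(3) ub(3) apply simp
    done
  have "a = ub" using U ab by blast
  then have b: "b \<in> cell K" "cdom K b = \<psi>" "ccod K b = \<psi>" "wl K c2 b = wl K c2 ub" "ub = vcomp K ub b"
    using ab0(5-9) unfolding \<psi>_def by (simp_all only:)
  have bt: "t1 K (cdom K b) = s1 K d2" "t1 K (cdom K b) = s1 K c2" "s1 K (cdom K b) = P"
    using b(1-3) \<psi>a by auto
  have CRh: "comp1 K C (comp1 K h r) = C"
    using arg_cong[OF C\<sigma>, of "ccod K"] by simp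
  have \<psi>h: "\<psi> \<in> hom K P (sE S2)" using \<psi>a unfolding hom_def S2 by simp
  have \<psi>c: "comp1 K c2 \<psi> = C"
  proof -
    have "comp1 K c2 \<psi> = ccod K (wl K c2 b)" using b(1-3) bt by simp
    also have "\<dots> = ccod K (wl K c2 ub)" using b(1-4) by simp
    also have "\<dots> = comp1 K c2 (comp1 K \<phi> r)" using ub(1,2) ubt e_def by simp
    also have "\<dots> = comp1 K (comp1 K c2 \<phi>) r" by simp
    also have "\<dots> = comp1 K C (comp1 K h r)" using \<phi>c' by simp
    finally show ?thesis using CRh by simp
  qed
  have \<psi>d: "comp1 K d2 \<psi> = D"
    using arg_cong[OF ub(3), of "cdom K"] ub(1,2) ubt \<Lambda> unfolding \<psi>_def by simp
  have \<psi>\<phi>: "comp1 K \<psi> h = \<phi>"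
  proof -
    define w where "w = wr K ub h"
    define b' where "b' = wr K b h"
    have w: "w \<in> cell K" "ccod K w = \<phi>" "cdom K w = comp1 K \<psi> h"
      unfolding w_def \<psi>_def using ub(1,2) ubt e_def rh by simp_all
    have b': "b' \<in> cell K" "ccod K b' = comp1 K \<psi> h" "cdom K b' = comp1 K \<psi> h"
      unfolding b'_def using b(1-3) bt by simp_all
    have wc: "wl K c2 w = wr K (wl K c2 ub) h" unfolding w_def using ub(1,2) ubt by simp
    have b'c: "wl K c2 b' = wr K (wl K c2 ub) h" unfolding b'_def using b(1-4) bt by simp
    have wd: "wl K d2 w = ide2 K (comp1 K D h)" unfolding w_def using ub(1,2,3) ubt \<Lambda>_def D\<sigma> by simp
    have "wl K d2 ub = wl K d2 (vcomp K ub b)" using b(5) by (rule arg_cong)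
    also have "\<dots> = vcomp K (wl K d2 ub) (wl K d2 b)"
      by (rule wl_vcomp) (use b(1-3) ub(1) ubt \<psi>_def in simp_all)
    finally have yv0: "wl K d2 ub = vcomp K (wl K d2 ub) (wl K d2 b)" .
    have yv: "vcomp K \<Lambda> (wl K d2 b) = \<Lambda>" using yv0[symmetric] unfolding ub(3) .
    have W\<Lambda>: "wr K \<Lambda> h = ide2 K (comp1 K D h)" using D\<sigma> \<Lambda>_def by simp
    have ya: "wl K d2 b \<in> cell K" "cdom K (wl K d2 b) = D" "ccod K (wl K d2 b) = D"
      using b(1-3) bt \<psi>d by simp_all
    have "ide2 K (comp1 K D h) = wr K \<Lambda> h" using W\<Lambda> by simp
    also have "\<dots> = wr K (vcomp K \<Lambda> (wl K d2 b)) h" by (simp only: yv)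
    also have "\<dots> = vcomp K (wr K \<Lambda> h) (wr K (wl K d2 b) h)"
      by (rule wr_vcomp) (use ya \<Lambda> \<Lambda>d e2 in simp_all)
    also have "\<dots> = vcomp K (ide2 K (comp1 K D h)) (wr K (wl K d2 b) h)" using W\<Lambda> by simp
    also have "\<dots> = wr K (wl K d2 b) h" using ya by simp
    finally have b'd: "wl K d2 b' = ide2 K (comp1 K D h)"
      unfolding b'_def using b(1-3) bt by simp
    have xd: "wl K c2 ub \<in> cell K" "ccod K (wl K c2 ub) = comp1 K c2 e" "cdom K (wl K c2 ub) = comp1 K c2 \<psi>"
      using ub(1,2) e2 \<psi>_def ubt by simp_all
    have xh: "wr K (wl K c2 ub) h \<in> cell K" "cdom K (wr K (wl K c2 ub) h) = comp1 K c2 (comp1 K \<psi> h)"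
      using xd e2 \<psi>a by simp_all
    have ex: "\<exists>!vb. vb \<in> cell K \<and> cdom K vb = comp1 K \<psi> h \<and> (\<exists>g. wl K d2 vb = ide2 K g) \<and> wl K c2 vb = wr K (wl K c2 ub) h"
      using df_lift2[OF df Q, of "comp1 K \<psi> h" "wr K (wl K c2 ub) h", unfolded sdS] \<psi>a xh
      by (simp add: hom_def)
    have "w = b'" using ex w b' wd b'd wc b'c by blast
    then have "ccod K w = ccod K b'" by simp
    then show ?thesis using w b' by simp
  qed
  show ?thesis
  proof (rule ex1I[of _ \<psi>])
    show "\<psi> \<in> hom K P (sE S2) \<and> comp1 K (sd S2) \<psi> = D \<and> comp1 K (sc S2) \<psi> = C \<and> comp1 K \<psi> h = \<phi>"
      using \<psi>h \<psi>d \<psi>c \<psi>\<phi> sdS by simp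
  next
    fix \<psi>' assume as: "\<psi>' \<in> hom K P (sE S2) \<and> comp1 K (sd S2) \<psi>' = D \<and> comp1 K (sc S2) \<psi>' = C \<and> comp1 K \<psi>' h = \<phi>"
    have pa: "\<psi>' \<in> arr K" "s1 K \<psi>' = P" "t1 K \<psi>' = E2" "comp1 K d2 \<psi>' = D" "comp1 K c2 \<psi>' = C" "comp1 K \<psi>' h = \<phi>"
      using as sdS unfolding hom_def by auto
    define \<omega> where "\<omega> = wl K \<psi>' \<sigma>"
    have \<omega>: "\<omega> \<in> cell K" unfolding \<omega>_def using pa by simp
    have "ccod K \<omega> = comp1 K \<psi>' (comp1 K h r)" unfolding \<omega>_def using pa by simp
    also have "\<dots> = comp1 K (comp1 K \<psi>' h) r" using pa(1-3) by simp
    finally have \<omega>d: "ccod K \<omega> = e" using pa(6) e_def by simp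
    have "wl K c2 \<omega> = wl K (comp1 K c2 \<psi>') \<sigma>" unfolding \<omega>_def using pa(1-3) by simp
    then have "wl K c2 \<omega> = ide2 K C" using C\<sigma> pa(5) by simp
    then have \<omega>1: "\<exists>g. wl K c2 \<omega> = ide2 K g" by blast
    have "wl K d2 \<omega> = wl K (comp1 K d2 \<psi>') \<sigma>" unfolding \<omega>_def using pa(1-3) by simp
    then have \<omega>2: "wl K d2 \<omega> = \<Lambda>" unfolding \<Lambda>_def using pa(4) by simp
    have "\<omega> = ub" using U \<omega> \<omega>d \<omega>1 \<omega>2 by blast
    then have "cdom K \<omega> = \<psi>" unfolding \<psi>_def by simp
    then show "\<psi>' = \<psi>" unfolding \<omega>_def using pa by simp
  qed
qed

lemma pb_spec: assumes "finitely_complete K" "f \<in> arr K" "g \<in> arr K" "t1 K f = t1 K g" "pb K f g = (P, p1, p2)"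
  shows "is_pullback K f g P p1 p2"
proof -
  obtain P' p1' p2' where "is_pullback K f g P' p1' p2'" using assms(1-4) unfolding finitely_complete_def by blast
  then have "\<exists>x. (\<lambda>(P, p1, p2). is_pullback K f g P p1 p2) x" by auto
  from someI_ex[OF this] show ?thesis using assms(5) unfolding pb_def by simp
qed

lemma cm_spec: assumes "finitely_complete K" "f \<in> arr K" "g \<in> arr K" "t1 K f = t1 K g" "cm K f g = (P, p, q, l)"
  shows "is_comma K f g P p q l"
proof -
  obtain P' p' q' l' where "is_comma K f g P' p' q' l'" using assms(1-4) unfolding finitely_complete_def by blast
  then have "\<exists>x. (\<lambda>(P, p, q, l). is_comma K f g P p q l) x" by auto
  from someI_ex[OF this] show ?thesis using assms(5) unfolding cm_def by simp
qed

lemma part1: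
  assumes fc: "finitely_complete K" and f: "f \<in> arr K" and X: "X \<in> obj K"
  and S1: "is_span K X (s1 K f) S1" and S2: "discrete_fibration K X (t1 K f) S2"
  and \<phi>: "span_map K (span_comp K S1 (span_of K f)) S2 \<phi>"
  shows "\<exists>!\<psi>. span_map K (span_comp K S1 (fslash K f)) S2 \<psi> \<and>
             comp1 K \<psi> (span_hmap K S1 (span_of K f) S1 (fslash K f) (ide1 K (sE S1)) (i_f K f)) = \<phi>"
proof -
  define A where "A = s1 K f"
  define B where "B = t1 K f"
  have AB: "A \<in> obj K" "B \<in> obj K" using f unfolding A_def B_def by simp_all
  obtain d1 E1 c1 where S1e: "S1 = (d1, E1, c1)" by (cases S1) auto
  have sp1: "E1 \<in> obj K" "d1 \<in> hom K E1 X" "c1 \<in> hom K E1 A"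
    using S1 unfolding is_span_def S1e sd_def sE_def sc_def A_def by auto
  have S1s: "sd S1 = d1" "sE S1 = E1" "sc S1 = c1" unfolding S1e sd_def sE_def sc_def by simp_all
  obtain P0 p q l where cmf: "cm K f (ide1 K B) = (P0, p, q, l)" by (cases "cm K f (ide1 K B)") auto
  have cmm: "is_comma K f (ide1 K B) P0 p q l"
    by (rule cm_spec[OF fc f _ _ cmf]) (use AB B_def in simp_all)
  have fsl: "fslash K f = (p, P0, q)" unfolding fslash_def using cmf B_def by simp
  obtain Q a1 a2 where pbQ: "pb K c1 (ide1 K A) = (Q, a1, a2)" by (cases "pb K c1 (ide1 K A)") auto
  obtain P b1 b2 where pbP: "pb K c1 p = (P, b1, b2)" by (cases "pb K c1 p") auto
  have pQ: "is_pullback K c1 (ide1 K A) Q a1 a2"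
    by (rule pb_spec[OF fc _ _ _ pbQ]) (use sp1 AB in \<open>simp_all add: hom_def\<close>)
  have pP: "is_pullback K c1 p P b1 b2"
    by (rule pb_spec[OF fc _ _ _ pbP]) (use sp1 AB cmm in \<open>simp_all add: hom_def is_comma_def A_def\<close>)
  have cm0: "P0 \<in> obj K" "p \<in> hom K P0 A" "q \<in> hom K P0 B" "l \<in> cell2 K (comp1 K f p) (comp1 K (ide1 K B) q)"
    using cmm AB unfolding is_comma_def A_def B_def by simp_all
  have cm1: "\<And>Y x y \<theta>. Y \<in> obj K \<Longrightarrow> x \<in> hom K Y A \<Longrightarrow> y \<in> hom K Y B \<Longrightarrow>
       \<theta> \<in> cell2 K (comp1 K f x) (comp1 K (ide1 K B) y) \<Longrightarrow>
        (\<exists>!z. z \<in> hom K Y P0 \<and> comp1 K p z = x \<and> comp1 K q z = y \<and> wr K l z = \<theta>)"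
    using cmm AB unfolding is_comma_def A_def B_def by simp
  have cm2: "\<And>Y z z' \<alpha> \<beta>. Y \<in> obj K \<Longrightarrow> z \<in> hom K Y P0 \<Longrightarrow> z' \<in> hom K Y P0 \<Longrightarrow>
        \<alpha> \<in> cell2 K (comp1 K p z) (comp1 K p z') \<Longrightarrow>
        \<beta> \<in> cell2 K (comp1 K q z) (comp1 K q z') \<Longrightarrow>
        vcomp K (wl K (ide1 K B) \<beta>) (wr K l z) = vcomp K (wr K l z') (wl K f \<alpha>) \<Longrightarrow>
        (\<exists>!\<gamma>. \<gamma> \<in> cell2 K z z' \<and> wl K p \<gamma> = \<alpha> \<and> wl K q \<gamma> = \<beta>)"
    using cmm unfolding is_comma_def by blast
  have q0: "Q \<in> obj K" "a1 \<in> hom K Q E1" "a2 \<in> hom K Q A" "comp1 K c1 a1 = comp1 K (ide1 K A) a2"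
    using pQ sp1 AB unfolding is_pullback_def by (simp_all add: hom_def)
  have eqs: "s1 K c1 = E1" "s1 K (ide1 K A) = A" "s1 K p = P0"
    using sp1 AB cm0 by (simp_all add: hom_def)
  have q1': "\<forall>Y\<in>obj K. \<forall>x\<in>hom K Y (s1 K c1). \<forall>y\<in>hom K Y (s1 K (ide1 K A)). comp1 K c1 x = comp1 K (ide1 K A) y \<longrightarrow>
        (\<exists>!z. z \<in> hom K Y Q \<and> comp1 K a1 z = x \<and> comp1 K a2 z = y)"
    using pQ unfolding is_pullback_def by blast
  have q1: "\<And>Y x y. Y \<in> obj K \<Longrightarrow> x \<in> hom K Y E1 \<Longrightarrow> y \<in> hom K Y A \<Longrightarrow> comp1 K c1 x = comp1 K (ide1 K A) y \<Longrightarrow>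
        (\<exists>!z. z \<in> hom K Y Q \<and> comp1 K a1 z = x \<and> comp1 K a2 z = y)"
    using q1'[unfolded eqs] by blast
  have p0: "P \<in> obj K" "b1 \<in> hom K P E1" "b2 \<in> hom K P P0" "comp1 K c1 b1 = comp1 K p b2"
    using pP sp1 cm0 unfolding is_pullback_def by (simp_all add: hom_def)
  have p1': "\<forall>Y\<in>obj K. \<forall>x\<in>hom K Y (s1 K c1). \<forall>y\<in>hom K Y (s1 K p). comp1 K c1 x = comp1 K p y \<longrightarrow>
        (\<exists>!z. z \<in> hom K Y P \<and> comp1 K b1 z = x \<and> comp1 K b2 z = y)"
    using pP unfolding is_pullback_def by blast
  have p1: "\<And>Y x y. Y \<in> obj K \<Longrightarrow> x \<in> hom K Y E1 \<Longrightarrow> y \<in> hom K Y P0 \<Longrightarrow> comp1 K c1 x = comp1 K p y \<Longrightarrow>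
        (\<exists>!z. z \<in> hom K Y P \<and> comp1 K b1 z = x \<and> comp1 K b2 z = y)"
    using p1'[unfolded eqs] by blast
  have p2: "\<And>Y z z' \<alpha> \<beta>. Y \<in> obj K \<Longrightarrow> z \<in> hom K Y P \<Longrightarrow> z' \<in> hom K Y P \<Longrightarrow>
        \<alpha> \<in> cell2 K (comp1 K b1 z) (comp1 K b1 z') \<Longrightarrow>
        \<beta> \<in> cell2 K (comp1 K b2 z) (comp1 K b2 z') \<Longrightarrow> wl K c1 \<alpha> = wl K p \<beta> \<Longrightarrow>
        (\<exists>!\<gamma>. \<gamma> \<in> cell2 K z z' \<and> wl K b1 \<gamma> = \<alpha> \<and> wl K b2 \<gamma> = \<beta>)"
    using pP unfolding is_pullback_def by blast
  have ar: "d1 \<in> arr K" "c1 \<in> arr K" "p \<in> arr K" "q \<in> arr K" "a1 \<in> arr K" "a2 \<in> arr K"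
     "b1 \<in> arr K" "b2 \<in> arr K"
    and ty: "s1 K d1 = E1" "t1 K d1 = X" "s1 K c1 = E1" "t1 K c1 = A" "s1 K p = P0" "t1 K p = A"
     "s1 K q = P0" "t1 K q = B" "s1 K a1 = Q" "t1 K a1 = E1" "s1 K a2 = Q" "t1 K a2 = A"
     "s1 K b1 = P" "t1 K b1 = E1" "s1 K b2 = P" "t1 K b2 = P0" "s1 K f = A" "t1 K f = B"
    using sp1 cm0 q0 p0 unfolding hom_def A_def B_def by simp_all
  have lc: "l \<in> cell K" "cdom K l = comp1 K f p" "ccod K l = q"
    using cm0(4) ar ty AB unfolding cell2_def by simp_all
  note [simp] = ar ty AB f cm0(1) q0(1) p0(1) sp1(1) X
  have sq: "comp1 K c1 a1 = a2" "comp1 K c1 b1 = comp1 K p b2" using q0(4) p0(4) by simp_all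
  define i where "i = i_f K f"
  have "\<exists>!z. z \<in> hom K A P0 \<and> comp1 K p z = ide1 K A \<and> comp1 K q z = f \<and> wr K l z = ide2 K f"
    using cm1[of A "ide1 K A" f "ide2 K f"] by (simp add: hom_def cell2_def)
  then have iT: "i \<in> hom K A P0 \<and> comp1 K p i = ide1 K A \<and> comp1 K q i = f \<and> wr K l i = ide2 K f"
    unfolding i_def i_f_def ty cmf prod.case by (rule theI')
  then have i: "i \<in> arr K" "s1 K i = A" "t1 K i = P0" "comp1 K p i = ide1 K A" "comp1 K q i = f" "wr K l i = ide2 K f"
    unfolding hom_def by simp_all
  note [simp] = i(1-3)
  have pi: "\<And>x. x \<in> arr K \<Longrightarrow> t1 K x = A \<Longrightarrow> comp1 K p (comp1 K i x) = x"
  proof -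
    fix x assume x: "x \<in> arr K" "t1 K x = A"
    have "comp1 K p (comp1 K i x) = comp1 K (comp1 K p i) x" using x by simp
    also have "\<dots> = x" using i(4) x by simp
    finally show "comp1 K p (comp1 K i x) = x" .
  qed
  have qi: "\<And>x. x \<in> arr K \<Longrightarrow> t1 K x = A \<Longrightarrow> comp1 K q (comp1 K i x) = comp1 K f x"
  proof -
    fix x assume x: "x \<in> arr K" "t1 K x = A"
    have "comp1 K q (comp1 K i x) = comp1 K (comp1 K q i) x" using x by simp
    also have "\<dots> = comp1 K f x" using i(5) x by simp
    finally show "comp1 K q (comp1 K i x) = comp1 K f x" .
  qed
  have so: "span_of K f = (ide1 K A, A, f)" unfolding span_of_def by simp
  have sc1: "span_comp K S1 (span_of K f) = (comp1 K d1 a1, Q, comp1 K f a2)"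
    unfolding span_comp_def S1e so sd_def sc_def fst_conv snd_conv pbQ prod.case by simp
  have sc2: "span_comp K S1 (fslash K f) = (comp1 K d1 b1, P, comp1 K q b2)"
    unfolding span_comp_def S1e fsl sd_def sc_def fst_conv snd_conv pbP prod.case by simp
  define h where "h = span_hmap K S1 (span_of K f) S1 (fslash K f) (ide1 K (sE S1)) (i_f K f)"
  have "\<exists>!z. z \<in> hom K Q P \<and> comp1 K b1 z = comp1 K (ide1 K E1) a1 \<and> comp1 K b2 z = comp1 K i a2"
    using p1[of Q "comp1 K (ide1 K E1) a1" "comp1 K i a2"] sq pi[of a2] by (simp add: hom_def)
  then have hT: "h \<in> hom K Q P \<and> comp1 K b1 h = comp1 K (ide1 K E1) a1 \<and> comp1 K b2 h = comp1 K i a2"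
    unfolding h_def span_hmap_def S1e so fsl sd_def sc_def sE_def fst_conv snd_conv pbP pbQ prod.case i_def[symmetric]
    by (rule theI')
  then have h: "h \<in> arr K" "s1 K h = Q" "t1 K h = P" "comp1 K b1 h = a1" "comp1 K b2 h = comp1 K i a2"
    unfolding hom_def by simp_all
  note [simp] = h(1-3)
  obtain r where rT: "r \<in> hom K P Q" "comp1 K a1 r = b1" "comp1 K a2 r = comp1 K p b2"
  proof -
    have "\<exists>!z. z \<in> hom K P Q \<and> comp1 K a1 z = b1 \<and> comp1 K a2 z = comp1 K p b2"
      using q1[of P b1 "comp1 K p b2"] sq by (simp add: hom_def)
    then show ?thesis using that by blast
  qed
  then have r: "r \<in> arr K" "s1 K r = P" "t1 K r = Q" unfolding hom_def by simp_all
  note [simp] = r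
  have rh: "comp1 K r h = ide1 K Q"
  proof -
    have u: "\<exists>!z. z \<in> hom K Q Q \<and> comp1 K a1 z = a1 \<and> comp1 K a2 z = a2"
      using q1[of Q a1 a2] sq by (simp add: hom_def)
    have "comp1 K a1 (comp1 K r h) = comp1 K (comp1 K a1 r) h" by simp
    also have "\<dots> = a1" using rT(2) h(4) by simp
    finally have 1: "comp1 K a1 (comp1 K r h) = a1" .
    have "comp1 K a2 (comp1 K r h) = comp1 K (comp1 K a2 r) h" by simp
    also have "\<dots> = comp1 K (comp1 K p i) a2" using rT(3) h(5) by simp
    also have "\<dots> = a2" using i(4) by simp
    finally have 2: "comp1 K a2 (comp1 K r h) = a2" .
    have 3: "comp1 K r h \<in> hom K Q Q" "ide1 K Q \<in> hom K Q Q" "comp1 K a1 (ide1 K Q) = a1" "comp1 K a2 (ide1 K Q) = a2"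
      by (simp_all add: hom_def)
    show ?thesis using u 1 2 3 by blast
  qed
  have lt: "t1 K (cdom K l) = B" "s1 K (cdom K l) = P0" using lc by simp_all
  have wlip: "wr K l (comp1 K i p) = ide2 K (comp1 K f p)"
  proof -
    have "wr K l (comp1 K i p) = wr K (wr K l i) p" using lc by simp
    also have "\<dots> = ide2 K (comp1 K f p)" using i(6) by simp
    finally show ?thesis .
  qed
  obtain \<sigma> where \<sigma>: "\<sigma> \<in> cell2 K (comp1 K i p) (ide1 K P0)" "wl K p \<sigma> = ide2 K p" "wl K q \<sigma> = l"
  proof -
    have c1: "comp1 K i p \<in> hom K P0 P0" "ide1 K P0 \<in> hom K P0 P0" by (simp_all add: hom_def)
    have c2: "ide2 K p \<in> cell2 K (comp1 K p (comp1 K i p)) (comp1 K p (ide1 K P0))"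
      using pi[of p] by (simp add: cell2_def)
    have c3: "l \<in> cell2 K (comp1 K q (comp1 K i p)) (comp1 K q (ide1 K P0))"
      using qi[of p] lc by (simp add: cell2_def)
    have c4: "vcomp K (wl K (ide1 K B) l) (wr K l (comp1 K i p)) = vcomp K (wr K l (ide1 K P0)) (wl K f (ide2 K p))"
      using lc lt wlip by simp
    show ?thesis using cm2[OF cm0(1) c1 c2 c3 c4] that by blast
  qed
  have sg: "\<sigma> \<in> cell K" "cdom K \<sigma> = comp1 K i p" "ccod K \<sigma> = ide1 K P0" using \<sigma>(1) unfolding cell2_def by simp_all
  have hr1: "comp1 K b1 (comp1 K h r) = b1"
  proof -
    have "comp1 K b1 (comp1 K h r) = comp1 K (comp1 K b1 h) r" by simp
    also have "\<dots> = b1" using h(4) rT(2) by simp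
    finally show ?thesis .
  qed
  have hr2: "comp1 K b2 (comp1 K h r) = comp1 K i (comp1 K p b2)"
  proof -
    have "comp1 K b2 (comp1 K h r) = comp1 K (comp1 K b2 h) r" by simp
    also have "\<dots> = comp1 K i (comp1 K p b2)" using h(5) rT(3) by simp
    finally show ?thesis .
  qed
  obtain \<sigma>' where \<sigma>': "\<sigma>' \<in> cell2 K (comp1 K h r) (ide1 K P)" "wl K b1 \<sigma>' = ide2 K b1" "wl K b2 \<sigma>' = wr K \<sigma> b2"
  proof -
    have c1: "comp1 K h r \<in> hom K P P" "ide1 K P \<in> hom K P P" by (simp_all add: hom_def)
    have c2: "ide2 K b1 \<in> cell2 K (comp1 K b1 (comp1 K h r)) (comp1 K b1 (ide1 K P))"
      using hr1 by (simp add: cell2_def)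
    have c3: "wr K \<sigma> b2 \<in> cell2 K (comp1 K b2 (comp1 K h r)) (comp1 K b2 (ide1 K P))"
      using hr2 sg by (simp add: cell2_def)
    have "wl K p (wr K \<sigma> b2) = wr K (wl K p \<sigma>) b2" using sg by simp
    also have "\<dots> = ide2 K (comp1 K p b2)" using \<sigma>(2) by simp
    finally have c4: "wl K c1 (ide2 K b1) = wl K p (wr K \<sigma> b2)" using sq(2) by simp
    show ?thesis using p2[OF p0(1) c1 c2 c3 c4] that by blast
  qed
  have sg': "\<sigma>' \<in> cell K" "cdom K \<sigma>' = comp1 K h r" "ccod K \<sigma>' = ide1 K P" using \<sigma>'(1) unfolding cell2_def by simp_all
  have D\<sigma>: "wl K (comp1 K d1 b1) \<sigma>' = ide2 K (comp1 K d1 b1)"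
  proof -
    have "wl K (comp1 K d1 b1) \<sigma>' = wl K d1 (wl K b1 \<sigma>')" using sg' by simp
    also have "\<dots> = ide2 K (comp1 K d1 b1)" using \<sigma>'(2) by simp
    finally show ?thesis .
  qed
  have C\<sigma>: "wr K (wl K (comp1 K q b2) \<sigma>') h = ide2 K (comp1 K (comp1 K q b2) h)"
  proof -
    have "wl K (comp1 K q b2) \<sigma>' = wl K q (wl K b2 \<sigma>')" using sg' by simp
    also have "\<dots> = wl K q (wr K \<sigma> b2)" using \<sigma>'(3) by simp
    also have "\<dots> = wr K (wl K q \<sigma>) b2" using sg by simp
    also have "\<dots> = wr K l b2" using \<sigma>(3) by simp
    finally have 1: "wl K (comp1 K q b2) \<sigma>' = wr K l b2" .
    have "wr K (wr K l b2) h = wr K l (comp1 K b2 h)" using lc by simp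
    also have "\<dots> = wr K l (comp1 K i a2)" using h(5) by simp
    also have "\<dots> = wr K (wr K l i) a2" using lc by simp
    also have "\<dots> = ide2 K (comp1 K f a2)" using i(6) by simp
    finally have 2: "wr K (wr K l b2) h = ide2 K (comp1 K f a2)" .
    have "comp1 K (comp1 K q b2) h = comp1 K q (comp1 K b2 h)" by simp
    also have "\<dots> = comp1 K f a2" using h(5) qi[of a2] by simp
    finally have 3: "comp1 K (comp1 K q b2) h = comp1 K f a2" .
    show ?thesis using 1 2 3 by simp
  qed
  have \<phi>': "\<phi> \<in> hom K Q (sE S2)" "comp1 K (sd S2) \<phi> = comp1 K d1 a1" "comp1 K (sc S2) \<phi> = comp1 K f a2"
    using \<phi> unfolding span_map_def sc1 sd_def sE_def sc_def by simp_all
  have \<phi>d: "comp1 K (sd S2) \<phi> = comp1 K (comp1 K d1 b1) h" using \<phi>'(2) h(4) by simp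
  have \<phi>c: "comp1 K (sc S2) \<phi> = comp1 K (comp1 K q b2) h"
  proof -
    have "comp1 K (comp1 K q b2) h = comp1 K q (comp1 K b2 h)" by simp
    also have "\<dots> = comp1 K f a2" using h(5) qi[of a2] by simp
    finally show ?thesis using \<phi>'(3) by simp
  qed
  have hh: "h \<in> hom K Q P" using hT by blast
  have Dh: "comp1 K d1 b1 \<in> hom K P X" and Ch: "comp1 K q b2 \<in> hom K P (t1 K f)" by (simp_all add: hom_def)
  have res: "\<exists>!\<psi>. \<psi> \<in> hom K P (sE S2) \<and> comp1 K (sd S2) \<psi> = comp1 K d1 b1 \<and> comp1 K (sc S2) \<psi> = comp1 K q b2 \<and> comp1 K \<psi> h = \<phi>"
    by (rule core1[OF S2 p0(1) hh rT(1) rh Dh Ch \<sigma>'(1) D\<sigma> C\<sigma> \<phi>'(1) \<phi>d \<phi>c])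
  show ?thesis unfolding h_def[symmetric] span_map_def sc2 using res by (simp add: sd_def sE_def sc_def)
qed

lemma part2:
  assumes fc: "finitely_complete K" and f: "f \<in> arr K" and X: "X \<in> obj K"
  and S1: "is_span K (s1 K f) X S1" and S2: "discrete_fibration K (t1 K f) X S2"
  and \<phi>: "span_map K (span_comp K (span_rev K f) S1) S2 \<phi>"
  shows "\<exists>!\<psi>. span_map K (span_comp K (slashf K f) S1) S2 \<psi> \<and>
             comp1 K \<psi> (span_hmap K (span_rev K f) S1 (slashf K f) S1 (j_f K f) (ide1 K (sE S1))) = \<phi>"
proof -
  define A where "A = s1 K f"
  define B where "B = t1 K f"
  have AB: "A \<in> obj K" "B \<in> obj K" using f unfolding A_def B_def by simp_all
  obtain d1 E1 c1 where S1e: "S1 = (d1, E1, c1)" by (cases S1) auto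
  have sp1: "E1 \<in> obj K" "d1 \<in> hom K E1 A" "c1 \<in> hom K E1 X"
    using S1 unfolding is_span_def S1e sd_def sE_def sc_def A_def by auto
  have S1s: "sd S1 = d1" "sE S1 = E1" "sc S1 = c1" unfolding S1e sd_def sE_def sc_def by simp_all
  obtain P0 p q l where cmf: "cm K (ide1 K B) f = (P0, p, q, l)" by (cases "cm K (ide1 K B) f") auto
  have cmm: "is_comma K (ide1 K B) f P0 p q l"
    by (rule cm_spec[OF fc _ f _ cmf]) (use AB B_def in simp_all)
  have fsl: "slashf K f = (p, P0, q)" unfolding slashf_def using cmf B_def by simp
  obtain Q a1 a2 where pbQ: "pb K (ide1 K A) d1 = (Q, a1, a2)" by (cases "pb K (ide1 K A) d1") auto
  obtain P b1 b2 where pbP: "pb K q d1 = (P, b1, b2)" by (cases "pb K q d1") auto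
  have cm0: "P0 \<in> obj K" "p \<in> hom K P0 B" "q \<in> hom K P0 A" "l \<in> cell2 K (comp1 K (ide1 K B) p) (comp1 K f q)"
    using cmm AB unfolding is_comma_def A_def B_def by simp_all
  have pQ: "is_pullback K (ide1 K A) d1 Q a1 a2"
    by (rule pb_spec[OF fc _ _ _ pbQ]) (use sp1 AB in \<open>simp_all add: hom_def\<close>)
  have pP: "is_pullback K q d1 P b1 b2"
    by (rule pb_spec[OF fc _ _ _ pbP]) (use sp1 AB cm0 in \<open>simp_all add: hom_def\<close>)
  have cm1: "\<And>Y x y \<theta>. Y \<in> obj K \<Longrightarrow> x \<in> hom K Y B \<Longrightarrow> y \<in> hom K Y A \<Longrightarrow>
       \<theta> \<in> cell2 K (comp1 K (ide1 K B) x) (comp1 K f y) \<Longrightarrow>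
        (\<exists>!z. z \<in> hom K Y P0 \<and> comp1 K p z = x \<and> comp1 K q z = y \<and> wr K l z = \<theta>)"
    using cmm AB unfolding is_comma_def A_def B_def by simp
  have cm2: "\<And>Y z z' \<alpha> \<beta>. Y \<in> obj K \<Longrightarrow> z \<in> hom K Y P0 \<Longrightarrow> z' \<in> hom K Y P0 \<Longrightarrow>
        \<alpha> \<in> cell2 K (comp1 K p z) (comp1 K p z') \<Longrightarrow>
        \<beta> \<in> cell2 K (comp1 K q z) (comp1 K q z') \<Longrightarrow>
        vcomp K (wl K f \<beta>) (wr K l z) = vcomp K (wr K l z') (wl K (ide1 K B) \<alpha>) \<Longrightarrow>
        (\<exists>!\<gamma>. \<gamma> \<in> cell2 K z z' \<and> wl K p \<gamma> = \<alpha> \<and> wl K q \<gamma> = \<beta>)"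
    using cmm unfolding is_comma_def by blast
  have q0: "Q \<in> obj K" "a1 \<in> hom K Q A" "a2 \<in> hom K Q E1" "comp1 K (ide1 K A) a1 = comp1 K d1 a2"
    using pQ sp1 AB unfolding is_pullback_def by (simp_all add: hom_def)
  have eqs: "s1 K d1 = E1" "s1 K (ide1 K A) = A" "s1 K q = P0"
    using sp1 AB cm0 by (simp_all add: hom_def)
  have q1': "\<forall>Y\<in>obj K. \<forall>x\<in>hom K Y (s1 K (ide1 K A)). \<forall>y\<in>hom K Y (s1 K d1). comp1 K (ide1 K A) x = comp1 K d1 y \<longrightarrow>
        (\<exists>!z. z \<in> hom K Y Q \<and> comp1 K a1 z = x \<and> comp1 K a2 z = y)"
    using pQ unfolding is_pullback_def by blast
  have q1: "\<And>Y x y. Y \<in> obj K \<Longrightarrow> x \<in> hom K Y A \<Longrightarrow> y \<in> hom K Y E1 \<Longrightarrow> comp1 K (ide1 K A) x = comp1 K d1 y \<Longrightarrow>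
        (\<exists>!z. z \<in> hom K Y Q \<and> comp1 K a1 z = x \<and> comp1 K a2 z = y)"
    using q1'[unfolded eqs] by blast
  have p0: "P \<in> obj K" "b1 \<in> hom K P P0" "b2 \<in> hom K P E1" "comp1 K q b1 = comp1 K d1 b2"
    using pP sp1 cm0 unfolding is_pullback_def by (simp_all add: hom_def)
  have p1': "\<forall>Y\<in>obj K. \<forall>x\<in>hom K Y (s1 K q). \<forall>y\<in>hom K Y (s1 K d1). comp1 K q x = comp1 K d1 y \<longrightarrow>
        (\<exists>!z. z \<in> hom K Y P \<and> comp1 K b1 z = x \<and> comp1 K b2 z = y)"
    using pP unfolding is_pullback_def by blast
  have p1: "\<And>Y x y. Y \<in> obj K \<Longrightarrow> x \<in> hom K Y P0 \<Longrightarrow> y \<in> hom K Y E1 \<Longrightarrow> comp1 K q x = comp1 K d1 y \<Longrightarrow>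
        (\<exists>!z. z \<in> hom K Y P \<and> comp1 K b1 z = x \<and> comp1 K b2 z = y)"
    using p1'[unfolded eqs] by blast
  have p2: "\<And>Y z z' \<alpha> \<beta>. Y \<in> obj K \<Longrightarrow> z \<in> hom K Y P \<Longrightarrow> z' \<in> hom K Y P \<Longrightarrow>
        \<alpha> \<in> cell2 K (comp1 K b1 z) (comp1 K b1 z') \<Longrightarrow>
        \<beta> \<in> cell2 K (comp1 K b2 z) (comp1 K b2 z') \<Longrightarrow> wl K q \<alpha> = wl K d1 \<beta> \<Longrightarrow>
        (\<exists>!\<gamma>. \<gamma> \<in> cell2 K z z' \<and> wl K b1 \<gamma> = \<alpha> \<and> wl K b2 \<gamma> = \<beta>)"
    using pP unfolding is_pullback_def by blast
  have ar: "d1 \<in> arr K" "c1 \<in> arr K" "p \<in> arr K" "q \<in> arr K" "a1 \<in> arr K" "a2 \<in> arr K"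
     "b1 \<in> arr K" "b2 \<in> arr K"
    and ty: "s1 K d1 = E1" "t1 K d1 = A" "s1 K c1 = E1" "t1 K c1 = X" "s1 K p = P0" "t1 K p = B"
     "s1 K q = P0" "t1 K q = A" "s1 K a1 = Q" "t1 K a1 = A" "s1 K a2 = Q" "t1 K a2 = E1"
     "s1 K b1 = P" "t1 K b1 = P0" "s1 K b2 = P" "t1 K b2 = E1" "s1 K f = A" "t1 K f = B"
    using sp1 cm0 q0 p0 unfolding hom_def A_def B_def by simp_all
  have lc: "l \<in> cell K" "cdom K l = p" "ccod K l = comp1 K f q"
    using cm0(4) ar ty AB unfolding cell2_def by simp_all
  note [simp] = ar ty AB f cm0(1) q0(1) p0(1) sp1(1) X
  have sq: "a1 = comp1 K d1 a2" "comp1 K q b1 = comp1 K d1 b2" using q0(4) p0(4) by simp_all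
  define j where "j = j_f K f"
  have "\<exists>!z. z \<in> hom K A P0 \<and> comp1 K p z = f \<and> comp1 K q z = ide1 K A \<and> wr K l z = ide2 K f"
    using cm1[of A f "ide1 K A" "ide2 K f"] by (simp add: hom_def cell2_def)
  then have jT: "j \<in> hom K A P0 \<and> comp1 K p j = f \<and> comp1 K q j = ide1 K A \<and> wr K l j = ide2 K f"
    unfolding j_def j_f_def ty cmf prod.case by (rule theI')
  then have j: "j \<in> arr K" "s1 K j = A" "t1 K j = P0" "comp1 K p j = f" "comp1 K q j = ide1 K A" "wr K l j = ide2 K f"
    unfolding hom_def by simp_all
  note [simp] = j(1-3)
  have qj: "\<And>x. x \<in> arr K \<Longrightarrow> t1 K x = A \<Longrightarrow> comp1 K q (comp1 K j x) = x"
  proof -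
    fix x assume x: "x \<in> arr K" "t1 K x = A"
    have "comp1 K q (comp1 K j x) = comp1 K (comp1 K q j) x" using x by simp
    also have "\<dots> = x" using j(5) x by simp
    finally show "comp1 K q (comp1 K j x) = x" .
  qed
  have pj: "\<And>x. x \<in> arr K \<Longrightarrow> t1 K x = A \<Longrightarrow> comp1 K p (comp1 K j x) = comp1 K f x"
  proof -
    fix x assume x: "x \<in> arr K" "t1 K x = A"
    have "comp1 K p (comp1 K j x) = comp1 K (comp1 K p j) x" using x by simp
    also have "\<dots> = comp1 K f x" using j(4) x by simp
    finally show "comp1 K p (comp1 K j x) = comp1 K f x" .
  qed
  have so: "span_rev K f = (f, A, ide1 K A)" unfolding span_rev_def by simp
  have sc1: "span_comp K (span_rev K f) S1 = (comp1 K f a1, Q, comp1 K c1 a2)"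
    unfolding span_comp_def S1e so sd_def sc_def fst_conv snd_conv pbQ prod.case by simp
  have sc2: "span_comp K (slashf K f) S1 = (comp1 K p b1, P, comp1 K c1 b2)"
    unfolding span_comp_def S1e fsl sd_def sc_def fst_conv snd_conv pbP prod.case by simp
  define h where "h = span_hmap K (span_rev K f) S1 (slashf K f) S1 (j_f K f) (ide1 K (sE S1))"
  have "\<exists>!z. z \<in> hom K Q P \<and> comp1 K b1 z = comp1 K j a1 \<and> comp1 K b2 z = comp1 K (ide1 K E1) a2"
    using p1[of Q "comp1 K j a1" "comp1 K (ide1 K E1) a2"] sq qj[of a1] by (simp add: hom_def)
  then have hT: "h \<in> hom K Q P \<and> comp1 K b1 h = comp1 K j a1 \<and> comp1 K b2 h = comp1 K (ide1 K E1) a2"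
    unfolding h_def span_hmap_def S1e so fsl sd_def sc_def sE_def fst_conv snd_conv pbP pbQ prod.case j_def[symmetric]
    by (rule theI')
  then have h: "h \<in> arr K" "s1 K h = Q" "t1 K h = P" "comp1 K b1 h = comp1 K j a1" "comp1 K b2 h = a2"
    unfolding hom_def by simp_all
  note [simp] = h(1-3)
  obtain r where rT: "r \<in> hom K P Q" "comp1 K a1 r = comp1 K q b1" "comp1 K a2 r = b2"
  proof -
    have "\<exists>!z. z \<in> hom K P Q \<and> comp1 K a1 z = comp1 K q b1 \<and> comp1 K a2 z = b2"
      using q1[of P "comp1 K q b1" b2] sq by (simp add: hom_def)
    then show ?thesis using that by blast
  qed
  then have r: "r \<in> arr K" "s1 K r = P" "t1 K r = Q" unfolding hom_def by simp_all
  note [simp] = r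
  have rh: "comp1 K r h = ide1 K Q"
  proof -
    have u: "\<exists>!z. z \<in> hom K Q Q \<and> comp1 K a1 z = a1 \<and> comp1 K a2 z = a2"
      using q1[of Q a1 a2] sq by (simp add: hom_def)
    have "comp1 K a1 (comp1 K r h) = comp1 K (comp1 K a1 r) h" by simp
    also have "\<dots> = comp1 K (comp1 K q j) a1" using rT(2) h(4) by simp
    also have "\<dots> = a1" using j(5) by simp
    finally have 1: "comp1 K a1 (comp1 K r h) = a1" .
    have "comp1 K a2 (comp1 K r h) = comp1 K (comp1 K a2 r) h" by simp
    also have "\<dots> = a2" using rT(3) h(5) by simp
    finally have 2: "comp1 K a2 (comp1 K r h) = a2" .
    have 3: "comp1 K r h \<in> hom K Q Q" "ide1 K Q \<in> hom K Q Q" "comp1 K a1 (ide1 K Q) = a1" "comp1 K a2 (ide1 K Q) = a2"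
      by (simp_all add: hom_def)
    show ?thesis using u 1 2 3 by blast
  qed
  have lt: "t1 K (cdom K l) = B" "s1 K (cdom K l) = P0" using lc by simp_all
  have wljq: "wr K l (comp1 K j q) = ide2 K (comp1 K f q)"
  proof -
    have "wr K l (comp1 K j q) = wr K (wr K l j) q" using lc by simp
    also have "\<dots> = ide2 K (comp1 K f q)" using j(6) by simp
    finally show ?thesis .
  qed
  obtain \<sigma> where \<sigma>: "\<sigma> \<in> cell2 K (ide1 K P0) (comp1 K j q)" "wl K p \<sigma> = l" "wl K q \<sigma> = ide2 K q"
  proof -
    have c1: "ide1 K P0 \<in> hom K P0 P0" "comp1 K j q \<in> hom K P0 P0" by (simp_all add: hom_def)
    have c2: "l \<in> cell2 K (comp1 K p (ide1 K P0)) (comp1 K p (comp1 K j q))"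
      using pj[of q] lc by (simp add: cell2_def)
    have c3: "ide2 K q \<in> cell2 K (comp1 K q (ide1 K P0)) (comp1 K q (comp1 K j q))"
      using qj[of q] by (simp add: cell2_def)
    have c4: "vcomp K (wl K f (ide2 K q)) (wr K l (ide1 K P0)) = vcomp K (wr K l (comp1 K j q)) (wl K (ide1 K B) l)"
      using lc lt wljq by simp
    show ?thesis using cm2[OF cm0(1) c1 c2 c3 c4] that by blast
  qed
  have sg: "\<sigma> \<in> cell K" "cdom K \<sigma> = ide1 K P0" "ccod K \<sigma> = comp1 K j q" using \<sigma>(1) unfolding cell2_def by simp_all
  have hr1: "comp1 K b1 (comp1 K h r) = comp1 K j (comp1 K q b1)"
  proof -
    have "comp1 K b1 (comp1 K h r) = comp1 K (comp1 K b1 h) r" by simp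
    also have "\<dots> = comp1 K j (comp1 K q b1)" using h(4) rT(2) by simp
    finally show ?thesis .
  qed
  have hr2: "comp1 K b2 (comp1 K h r) = b2"
  proof -
    have "comp1 K b2 (comp1 K h r) = comp1 K (comp1 K b2 h) r" by simp
    also have "\<dots> = b2" using h(5) rT(3) by simp
    finally show ?thesis .
  qed
  obtain \<sigma>' where \<sigma>': "\<sigma>' \<in> cell2 K (ide1 K P) (comp1 K h r)" "wl K b1 \<sigma>' = wr K \<sigma> b1" "wl K b2 \<sigma>' = ide2 K b2"
  proof -
    have c1: "ide1 K P \<in> hom K P P" "comp1 K h r \<in> hom K P P" by (simp_all add: hom_def)
    have c2: "wr K \<sigma> b1 \<in> cell2 K (comp1 K b1 (ide1 K P)) (comp1 K b1 (comp1 K h r))"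
      using hr1 sg by (simp add: cell2_def)
    have c3: "ide2 K b2 \<in> cell2 K (comp1 K b2 (ide1 K P)) (comp1 K b2 (comp1 K h r))"
      using hr2 by (simp add: cell2_def)
    have "wl K q (wr K \<sigma> b1) = wr K (wl K q \<sigma>) b1" using sg by simp
    also have "\<dots> = ide2 K (comp1 K q b1)" using \<sigma>(3) by simp
    finally have c4: "wl K q (wr K \<sigma> b1) = wl K d1 (ide2 K b2)" using sq(2) by simp
    show ?thesis using p2[OF p0(1) c1 c2 c3 c4] that by blast
  qed
  have sg': "\<sigma>' \<in> cell K" "cdom K \<sigma>' = ide1 K P" "ccod K \<sigma>' = comp1 K h r" using \<sigma>'(1) unfolding cell2_def by simp_all
  have C\<sigma>: "wl K (comp1 K c1 b2) \<sigma>' = ide2 K (comp1 K c1 b2)"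
  proof -
    have "wl K (comp1 K c1 b2) \<sigma>' = wl K c1 (wl K b2 \<sigma>')" using sg' by simp
    also have "\<dots> = ide2 K (comp1 K c1 b2)" using \<sigma>'(3) by simp
    finally show ?thesis .
  qed
  have D\<sigma>: "wr K (wl K (comp1 K p b1) \<sigma>') h = ide2 K (comp1 K (comp1 K p b1) h)"
  proof -
    have "wl K (comp1 K p b1) \<sigma>' = wl K p (wl K b1 \<sigma>')" using sg' by simp
    also have "\<dots> = wl K p (wr K \<sigma> b1)" using \<sigma>'(2) by simp
    also have "\<dots> = wr K (wl K p \<sigma>) b1" using sg by simp
    also have "\<dots> = wr K l b1" using \<sigma>(2) by simp
    finally have 1: "wl K (comp1 K p b1) \<sigma>' = wr K l b1" .
    have "wr K (wr K l b1) h = wr K l (comp1 K b1 h)" using lc by simp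
    also have "\<dots> = wr K l (comp1 K j a1)" using h(4) by simp
    also have "\<dots> = wr K (wr K l j) a1" using lc by simp
    also have "\<dots> = ide2 K (comp1 K f a1)" using j(6) by simp
    finally have 2: "wr K (wr K l b1) h = ide2 K (comp1 K f a1)" .
    have "comp1 K (comp1 K p b1) h = comp1 K p (comp1 K b1 h)" by simp
    also have "\<dots> = comp1 K f a1" using h(4) pj[of a1] by simp
    finally have 3: "comp1 K (comp1 K p b1) h = comp1 K f a1" .
    show ?thesis using 1 2 3 by simp
  qed
  have \<phi>': "\<phi> \<in> hom K Q (sE S2)" "comp1 K (sd S2) \<phi> = comp1 K f a1" "comp1 K (sc S2) \<phi> = comp1 K c1 a2"
    using \<phi> unfolding span_map_def sc1 sd_def sE_def sc_def by simp_all
  have \<phi>c: "comp1 K (sc S2) \<phi> = comp1 K (comp1 K c1 b2) h" using \<phi>'(3) h(5) by simp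
  have \<phi>d: "comp1 K (sd S2) \<phi> = comp1 K (comp1 K p b1) h"
  proof -
    have "comp1 K (comp1 K p b1) h = comp1 K p (comp1 K b1 h)" by simp
    also have "\<dots> = comp1 K f a1" using h(4) pj[of a1] by simp
    finally show ?thesis using \<phi>'(2) by simp
  qed
  have hh: "h \<in> hom K Q P" using hT by blast
  have Dh: "comp1 K p b1 \<in> hom K P (t1 K f)" and Ch: "comp1 K c1 b2 \<in> hom K P X" by (simp_all add: hom_def)
  have res: "\<exists>!\<psi>. \<psi> \<in> hom K P (sE S2) \<and> comp1 K (sd S2) \<psi> = comp1 K p b1 \<and> comp1 K (sc S2) \<psi> = comp1 K c1 b2 \<and> comp1 K \<psi> h = \<phi>"
    by (rule core2[OF S2 p0(1) hh rT(1) rh Dh Ch \<sigma>'(1) C\<sigma> D\<sigma> \<phi>'(1) \<phi>d \<phi>c])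
  show ?thesis unfolding h_def[symmetric] span_map_def sc2 using res by (simp add: sd_def sE_def sc_def)
qed

end

theorem theorem2p7:
  fixes K :: "('o, 'm, 'c) two_cat" and f :: 'm
  assumes "finitely_complete K" and "f \<in> arr K"
  shows
   "(\<forall>X\<in>obj K. \<forall>S1 S2. is_span K X (s1 K f) S1 \<and> discrete_fibration K X (t1 K f) S2 \<longrightarrow>
       (\<forall>\<phi>. span_map K (span_comp K S1 (span_of K f)) S2 \<phi> \<longrightarrow>
          (\<exists>!\<psi>. span_map K (span_comp K S1 (fslash K f)) S2 \<psi> \<and>
             comp1 K \<psi> (span_hmap K S1 (span_of K f) S1 (fslash K f) (ide1 K (sE S1)) (i_f K f)) = \<phi>)))
    \<and>
    (\<forall>X\<in>obj K. \<forall>S1 S2. is_span K (s1 K f) X S1 \<and> discrete_fibration K (t1 K f) X S2 \<longrightarrow>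
       (\<forall>\<phi>. span_map K (span_comp K (span_rev K f) S1) S2 \<phi> \<longrightarrow>
          (\<exists>!\<psi>. span_map K (span_comp K (slashf K f) S1) S2 \<psi> \<and>
             comp1 K \<psi> (span_hmap K (span_rev K f) S1 (slashf K f) S1 (j_f K f) (ide1 K (sE S1))) = \<phi>)))"
proof -
  interpret tc K using assms(1) unfolding finitely_complete_def by unfold_locales blast
  show ?thesis
  proof (intro conjI ballI allI impI)
    fix X S1 S2 \<phi>
    assume "X \<in> obj K" "is_span K X (s1 K f) S1 \<and> discrete_fibration K X (t1 K f) S2"
      "span_map K (span_comp K S1 (span_of K f)) S2 \<phi>"
    then show "\<exists>!\<psi>. span_map K (span_comp K S1 (fslash K f)) S2 \<psi> \<and>
             comp1 K \<psi> (span_hmap K S1 (span_of K f) S1 (fslash K f) (ide1 K (sE S1)) (i_f K f)) = \<phi>"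
      using part1[OF assms(1,2)] by blast
  next
    fix X S1 S2 \<phi>
    assume "X \<in> obj K" "is_span K (s1 K f) X S1 \<and> discrete_fibration K (t1 K f) X S2"
      "span_map K (span_comp K (span_rev K f) S1) S2 \<phi>"
    then show "\<exists>!\<psi>. span_map K (span_comp K (slashf K f) S1) S2 \<psi> \<and>
             comp1 K \<psi> (span_hmap K (span_rev K f) S1 (slashf K f) S1 (j_f K f) (ide1 K (sE S1))) = \<phi>"
      using part2[OF assms(1,2)] by blast
  qed
qed

end
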